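(* Let $\mathbb F$ be a field, $q(x_1,\dots,x_6)=x_1x_2+x_3x_4+x_5x_6$ on $\mathbb F^6$, and let $Q^+(5,\mathbb F)$ be its polar space with line-Grassmannian $Q^+_2(5,\mathbb F)$. Then for every proper subfield $\mathbb F_0$ of $\mathbb F$, the line-Grassmannian $Q^+_2(5,\mathbb F)$ is not $\mathbb F_0$-generated.
   Context: For a subfield $\mathbb F_0$, the same polynomial defines a quadratic form on $\mathbb F_0^6\subseteq\mathbb F^6$ with polar space $Q^+(5,\mathbb F_0)$. Every totally singular 2-dimensional $\mathbb F_0$-subspace $L$ of $\mathbb F_0^6$ spans over $\mathbb F$ a totally singular 2-dimensional subspace $\langle L\rangle_{\mathbb F}$ of $\mathbb F^6$. The line-Grassmannian $Q^+_2(5,\mathbb F)$ has as points the totally singular 2-dimensional subspaces of $\mathbb F^6$ and as lines the sets $\{Z: X\subset Z\subset Y\}$ of such subspaces, for $X$ a totally singular 1-space and $Y$ a totally singular 3-space with $X\subset Y$. A subspace of a point-line geometry is a set of points containing every line that meets it in at least two points; the span is the smallest subspace containing a set. $Q^+_2(5,\mathbb F)$ is $\mathbb F_0$-generated if the span of $\{\langle L\rangle_{\mathbb F}: L \text{ a line of } Q^+(5,\mathbb F_0)\}$ in $Q^+_2(5,\mathbb F)$ is the whole point set. *)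

theory Defs
  imports "HOL-Analysis.Finite_Cartesian_Product"
begin

text \<open>Vectors of F^6 are modelled as 'a^6 (index type 6 = {0,...,5}).\<close>

type_synonym 'a vec6 = "'a ^ 6"

definition smul :: "'a::field \<Rightarrow> 'a vec6 \<Rightarrow> 'a vec6" where
  "smul c v = (\<chi> i. c * v $ i)"

definition qform :: "'a::field vec6 \<Rightarrow> 'a" where
  "qform v = v $ 0 * v $ 1 + v $ 2 * v $ 3 + v $ 4 * v $ 5"

definition is_subfield :: "'a::field set \<Rightarrow> bool" where
  "is_subfield K \<longleftrightarrow> 0 \<in> K \<and> 1 \<in> K \<and>
     (\<forall>x\<in>K. \<forall>y\<in>K. x + y \<in> K \<and> x * y \<in> K) \<and>
     (\<forall>x\<in>K. - x \<in> K) \<and> (\<forall>x\<in>K. x \<noteq> 0 \<longrightarrow> inverse x \<in> K)"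

definition coords_in :: "'a::field set \<Rightarrow> 'a vec6 set" where
  "coords_in K = {v. \<forall>i. v $ i \<in> K}"

definition is_ksubspace :: "'a::field set \<Rightarrow> 'a vec6 set \<Rightarrow> bool" where
  "is_ksubspace K W \<longleftrightarrow> W \<subseteq> coords_in K \<and> 0 \<in> W \<and>
     (\<forall>u\<in>W. \<forall>v\<in>W. u + v \<in> W) \<and> (\<forall>c\<in>K. \<forall>v\<in>W. smul c v \<in> W)"

definition kspan :: "'a::field set \<Rightarrow> 'a vec6 set \<Rightarrow> 'a vec6 set" where
  "kspan K S = \<Inter> {W. is_ksubspace K W \<and> S \<subseteq> W}"

definition kindep :: "'a::field set \<Rightarrow> 'a vec6 set \<Rightarrow> bool" where
  "kindep K B \<longleftrightarrow> finite B \<and> (\<forall>c. (\<forall>b\<in>B. c b \<in> K) \<longrightarrow>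
      (\<Sum>b\<in>B. smul (c b) b) = 0 \<longrightarrow> (\<forall>b\<in>B. c b = 0))"

definition kdim_subspace :: "'a::field set \<Rightarrow> nat \<Rightarrow> 'a vec6 set \<Rightarrow> bool" where
  "kdim_subspace K k W \<longleftrightarrow> is_ksubspace K W \<and>
     (\<exists>B. B \<subseteq> coords_in K \<and> kindep K B \<and> card B = k \<and> kspan K B = W)"

definition totally_singular :: "'a::field vec6 set \<Rightarrow> bool" where
  "totally_singular W \<longleftrightarrow> (\<forall>w\<in>W. qform w = 0)"

text \<open>Totally singular k-dimensional K-subspaces of K^6 (K = UNIV gives F^6).\<close>
definition ts_subspaces :: "'a::field set \<Rightarrow> nat \<Rightarrow> 'a vec6 set set" where
  "ts_subspaces K k = {W. kdim_subspace K k W \<and> totally_singular W}"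

definition grass_points :: "'a::field vec6 set set" where
  "grass_points = ts_subspaces UNIV 2"

definition grass_lines :: "'a::field vec6 set set set" where
  "grass_lines = {{Z \<in> grass_points. X \<subseteq> Z \<and> Z \<subseteq> Y} | X Y.
      X \<in> ts_subspaces UNIV 1 \<and> Y \<in> ts_subspaces UNIV 3 \<and> X \<subseteq> Y}"

definition geom_subspace :: "'a::field vec6 set set \<Rightarrow> bool" where
  "geom_subspace P \<longleftrightarrow> P \<subseteq> grass_points \<and>
     (\<forall>l\<in>grass_lines. (\<exists>x y. x \<noteq> y \<and> x \<in> l \<inter> P \<and> y \<in> l \<inter> P) \<longrightarrow> l \<subseteq> P)"

definition geom_span :: "'a::field vec6 set set \<Rightarrow> 'a vec6 set set" where
  "geom_span S = \<Inter> {P. geom_subspace P \<and> S \<subseteq> P}"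

definition subfield_generated :: "'a::field set \<Rightarrow> bool" where
  "subfield_generated K \<longleftrightarrow>
     geom_span ((\<lambda>L. kspan UNIV L) ` ts_subspaces K 2) = grass_points"

end

theory Submission
  imports Defs "HOL-Analysis.Cartesian_Space"
begin


lemma univ6: "(UNIV::6 set) = {0,1,2,3,4,5}"
proof -
  have "card (UNIV::6 set) = 6" by simp
  moreover have "card ({0,1,2,3,4,5}::6 set) = 6" by simp
  ultimately show ?thesis by (metis card_subset_eq finite subset_UNIV)
qed

lemma all6: "(\<forall>i::6. P i) \<longleftrightarrow> P 0 \<and> P 1 \<and> P 2 \<and> P 3 \<and> P 4 \<and> P 5"
  by (metis UNIV_I empty_iff insert_iff univ6)

lemma ex6: "(\<exists>i::6. P i) \<longleftrightarrow> P 0 \<or> P 1 \<or> P 2 \<or> P 3 \<or> P 4 \<or> P 5"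
  by (metis UNIV_I empty_iff insert_iff univ6)

lemma vec6_eq: "(u::'a^6) = v \<longleftrightarrow> u$0 = v$0 \<and> u$1 = v$1 \<and> u$2 = v$2 \<and> u$3 = v$3 \<and> u$4 = v$4 \<and> u$5 = v$5"
  by (simp add: vec_eq_iff all6)

lemma vec6_nz: "(u::'a::zero^6) \<noteq> 0 \<longleftrightarrow> u$0 \<noteq> 0 \<or> u$1 \<noteq> 0 \<or> u$2 \<noteq> 0 \<or> u$3 \<noteq> 0 \<or> u$4 \<noteq> 0 \<or> u$5 \<noteq> 0"
  by (auto simp: vec6_eq)

lemma smul_eq: "smul = (*s)"
  by (auto simp: fun_eq_iff smul_def vector_scalar_mult_def)

definition bil :: "'a::field vec6 \<Rightarrow> 'a vec6 \<Rightarrow> 'a" where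
  "bil u v = u$0 * v$1 + u$1 * v$0 + u$2 * v$3 + u$3 * v$2 + u$4 * v$5 + u$5 * v$4"

lemma bil_sym: "bil u v = bil v u" by (simp add: bil_def algebra_simps)
lemma bil_add1: "bil (u+v) w = bil u w + bil v w" by (simp add: bil_def algebra_simps)
lemma bil_add2: "bil w (u+v) = bil w u + bil w v" by (simp add: bil_def algebra_simps)
lemma bil_diff1: "bil (u-v) w = bil u w - bil v w" by (simp add: bil_def algebra_simps)
lemma bil_diff2: "bil w (u-v) = bil w u - bil w v" by (simp add: bil_def algebra_simps)
lemma bil_smul1: "bil (c *s u) w = c * bil u w" by (simp add: bil_def algebra_simps)
lemma bil_smul2: "bil w (c *s u) = c * bil w u" by (simp add: bil_def algebra_simps)
lemma bil_zero1[simp]: "bil 0 w = 0" by (simp add: bil_def)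
lemma bil_zero2[simp]: "bil w 0 = 0" by (simp add: bil_def)
lemma bil_sum1: "bil (sum f A) w = (\<Sum>a\<in>A. bil (f a) w)"
  by (induction A rule: infinite_finite_induct) (auto simp: bil_add1)
lemma bil_sum2: "bil w (sum f A) = (\<Sum>a\<in>A. bil w (f a))"
  by (induction A rule: infinite_finite_induct) (auto simp: bil_add2)
lemma q_add: "qform (u+v) = qform u + qform v + bil u v"
  by (simp add: qform_def bil_def algebra_simps)
lemma q_smul: "qform (c *s u) = c^2 * qform u"
  by (simp add: qform_def algebra_simps power2_eq_square)
lemma q_diff: "qform (u-v) = qform u + qform v - bil u v"
  by (simp add: qform_def bil_def algebra_simps)
lemma bil_self: "bil u u = 2 * qform u"
  by (simp add: qform_def bil_def algebra_simps)

lemmas bil_lin = bil_add1 bil_add2 bil_diff1 bil_diff2 bil_smul1 bil_smul2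

lemma coords_UNIV[simp]: "coords_in UNIV = UNIV" by (auto simp: coords_in_def)

lemma ksub_UNIV: "is_ksubspace UNIV W \<longleftrightarrow> vec.subspace W"
  by (simp add: is_ksubspace_def vec.subspace_def smul_eq)

lemma kspan_UNIV: "kspan UNIV S = vec.span S"
proof -
  have "vec.span S \<subseteq> kspan UNIV S"
    unfolding kspan_def ksub_UNIV by (auto intro: vec.span_minimal[THEN subsetD])
  moreover have "kspan UNIV S \<subseteq> vec.span S"
    unfolding kspan_def ksub_UNIV using vec.span_superset[of S] vec.subspace_span[of S] by blast
  ultimately show ?thesis by blast
qed

lemma kindep_UNIV: "kindep UNIV B \<longleftrightarrow> vec.independent B"
  by (auto simp: kindep_def vec.independent_explicit smul_eq)

lemma kdim_UNIV: "kdim_subspace UNIV k W \<longleftrightarrow> vec.subspace W \<and> vec.dim W = k"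
proof
  assume "kdim_subspace UNIV k W"
  then obtain B where "vec.subspace W" "vec.independent B" "card B = k" "vec.span B = W"
    unfolding kdim_subspace_def ksub_UNIV kindep_UNIV kspan_UNIV by blast
  then show "vec.subspace W \<and> vec.dim W = k"
    using vec.dim_span_eq_card_independent[of B] by simp
next
  assume a: "vec.subspace W \<and> vec.dim W = k"
  obtain B where B: "B \<subseteq> W" "vec.independent B" "W \<subseteq> vec.span B" "card B = vec.dim W"
    using vec.basis_exists by blast
  have "vec.span B = W" using B a vec.span_subspace by blast
  moreover have "B \<subseteq> coords_in UNIV" by simp
  ultimately show "kdim_subspace UNIV k W"
    unfolding kdim_subspace_def ksub_UNIV kindep_UNIV kspan_UNIV using a B by blast
qed

definition tsq :: "'a::field vec6 set \<Rightarrow> bool" where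
  "tsq W \<longleftrightarrow> (\<forall>w\<in>W. qform w = 0)"

lemma ts_UNIV: "W \<in> ts_subspaces UNIV k \<longleftrightarrow> vec.subspace W \<and> vec.dim W = k \<and> tsq W"
  by (simp add: ts_subspaces_def kdim_UNIV totally_singular_def tsq_def)

lemma pts_iff: "Z \<in> grass_points \<longleftrightarrow> vec.subspace Z \<and> vec.dim Z = 2 \<and> tsq Z"
  by (simp add: grass_points_def ts_UNIV)

lemma tsq_bil: "vec.subspace W \<Longrightarrow> tsq W \<Longrightarrow> u \<in> W \<Longrightarrow> v \<in> W \<Longrightarrow> bil u v = 0"
proof -
  assume a: "vec.subspace W" "tsq W" "u \<in> W" "v \<in> W"
  then have "u + v \<in> W" by (simp add: vec.subspace_add)
  then show "bil u v = 0" using a q_add[of u v] unfolding tsq_def by simp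
qed

lemma sf_props:
  assumes "is_subfield K"
  shows sf0: "0 \<in> K" and sf1: "1 \<in> K" and sfadd: "x \<in> K \<Longrightarrow> y \<in> K \<Longrightarrow> x + y \<in> K"
    and sfmul: "x \<in> K \<Longrightarrow> y \<in> K \<Longrightarrow> x * y \<in> K" and sfneg: "x \<in> K \<Longrightarrow> - x \<in> K"
    and sfdiff: "x \<in> K \<Longrightarrow> y \<in> K \<Longrightarrow> x - y \<in> K"
    and sfdiv: "x \<in> K \<Longrightarrow> y \<in> K \<Longrightarrow> x / y \<in> K"
proof -
  have h: "0 \<in> K \<and> 1 \<in> K \<and> (\<forall>x\<in>K. \<forall>y\<in>K. x + y \<in> K \<and> x * y \<in> K) \<and>
     (\<forall>x\<in>K. - x \<in> K) \<and> (\<forall>x\<in>K. x \<noteq> 0 \<longrightarrow> inverse x \<in> K)"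
    using assms unfolding is_subfield_def .
  note h0 = h[THEN conjunct1] and h1 = h[THEN conjunct2, THEN conjunct1]
    and h2 = h[THEN conjunct2, THEN conjunct2, THEN conjunct1]
    and h3 = h[THEN conjunct2, THEN conjunct2, THEN conjunct2, THEN conjunct1]
    and h4 = h[THEN conjunct2, THEN conjunct2, THEN conjunct2, THEN conjunct2]
  show "0 \<in> K" by (fact h0)
  show "1 \<in> K" by (fact h1)
  show A3': "x \<in> K \<Longrightarrow> y \<in> K \<Longrightarrow> x + y \<in> K"
    using h2 by auto
  show A4: "x \<in> K \<Longrightarrow> y \<in> K \<Longrightarrow> x * y \<in> K"
    using h2 by auto
  show A5: "x \<in> K \<Longrightarrow> - x \<in> K" using h3 by auto
  show "x \<in> K \<Longrightarrow> y \<in> K \<Longrightarrow> x - y \<in> K"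
  proof -
    assume a: "x \<in> K" "y \<in> K"
    have "- y \<in> K" using h3 a(2) by auto
    then have "x + - y \<in> K" using h2 a(1) by auto
    then show ?thesis by simp
  qed
  show "x \<in> K \<Longrightarrow> y \<in> K \<Longrightarrow> x / y \<in> K"
  proof -
    assume a: "x \<in> K" "y \<in> K"
    show "x / y \<in> K"
    proof (cases "y = 0")
      case True then show ?thesis using h0 by simp
    next
      case False
      then have "inverse y \<in> K" using h4 a(2) by auto
      then have "x * inverse y \<in> K" using h2 a(1) by auto
      then show ?thesis by (simp add: divide_inverse)
    qed
  qed
qed

lemma rat_add: "is_subfield K \<Longrightarrow> u \<in> coords_in K \<Longrightarrow> v \<in> coords_in K \<Longrightarrow> u + v \<in> coords_in K"
  by (simp add: coords_in_def sf0 sfadd sfdiff sfmul)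
lemma rat_diff: "is_subfield K \<Longrightarrow> u \<in> coords_in K \<Longrightarrow> v \<in> coords_in K \<Longrightarrow> u - v \<in> coords_in K"
  by (simp add: coords_in_def sf0 sfadd sfdiff sfmul)
lemma rat_smul: "is_subfield K \<Longrightarrow> c \<in> K \<Longrightarrow> v \<in> coords_in K \<Longrightarrow> c *s v \<in> coords_in K"
  by (simp add: coords_in_def sf0 sfadd sfdiff sfmul)
lemma rat_zero: "is_subfield K \<Longrightarrow> 0 \<in> coords_in K"
  by (simp add: coords_in_def sf0 sfadd sfdiff sfmul)
lemma rat_bil: "is_subfield K \<Longrightarrow> u \<in> coords_in K \<Longrightarrow> v \<in> coords_in K \<Longrightarrow> bil u v \<in> K"
  unfolding coords_in_def bil_def by (simp add: sfadd sfmul)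
lemma rat_q: "is_subfield K \<Longrightarrow> u \<in> coords_in K \<Longrightarrow> qform u \<in> K"
  unfolding coords_in_def qform_def by (simp add: sfadd sfmul)



lemma nondeg: "(v::'a::field vec6) \<noteq> 0 \<Longrightarrow> \<exists>e. bil v e \<noteq> 0"
proof -
  assume "v \<noteq> 0"
  then have "v$0 \<noteq> 0 \<or> v$1 \<noteq> 0 \<or> v$2 \<noteq> 0 \<or> v$3 \<noteq> 0 \<or> v$4 \<noteq> 0 \<or> v$5 \<noteq> 0"
    by (simp add: vec6_nz)
  moreover have "bil v (axis 1 1) = v$0" "bil v (axis 0 1) = v$1" "bil v (axis 3 1) = v$2"
    "bil v (axis 2 1) = v$3" "bil v (axis 5 1) = v$4" "bil v (axis 4 1) = v$5"
    by (simp_all add: bil_def axis_def)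
  ultimately show ?thesis by metis
qed

lemma sum_delta_mult: "finite B \<Longrightarrow> b0 \<in> B \<Longrightarrow> (\<Sum>b\<in>B. f b * (if b0 = b then 1 else 0)) = (f b0::'a::field)"
proof -
  assume "finite B" "b0 \<in> B"
  have "(\<Sum>b\<in>B. f b * (if b0 = b then 1 else 0)) = (\<Sum>b\<in>B. if b = b0 then f b else 0)"
    by (rule sum.cong) auto
  also have "\<dots> = f b0" using \<open>finite B\<close> \<open>b0 \<in> B\<close> by (simp add: sum.delta)
  finally show ?thesis .
qed

lemma dual_basis:
  fixes B :: "'a::field vec6 set"
  assumes "finite B" "vec.independent B"
  shows "\<exists>x. \<forall>b\<in>B. \<forall>b'\<in>B. bil b (x b') = (if b = b' then 1 else 0)"
  using assms
proof (induction B rule: finite_induct)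
  case empty then show ?case by simp
next
  case (insert a B)
  have indB: "vec.independent B" and aB: "a \<notin> vec.span B"
    using insert.prems insert.hyps(2) vec.independent_insert[of a B] by auto
  obtain x where x: "\<forall>b\<in>B. \<forall>b'\<in>B. bil b (x b') = (if b = b' then 1 else 0)"
    using insert.IH indB by blast
  define s where "s = a - (\<Sum>b\<in>B. bil a (x b) *s b)"
  have sB: "bil s (x b0) = 0" if "b0 \<in> B" for b0
  proof -
    have "bil s (x b0) = bil a (x b0) - (\<Sum>b\<in>B. bil a (x b) * bil b (x b0))"
      unfolding s_def by (simp add: bil_diff1 bil_sum1 bil_smul1)
    also have "(\<Sum>b\<in>B. bil a (x b) * bil b (x b0)) = (\<Sum>b\<in>B. bil a (x b) * (if b0 = b then 1 else 0))"
      by (rule sum.cong) (use x that in auto)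
    also have "\<dots> = bil a (x b0)" by (rule sum_delta_mult[OF insert.hyps(1) that])
    finally show ?thesis by simp
  qed
  have s0: "s \<noteq> 0"
  proof
    assume "s = 0"
    then have "a - (\<Sum>b\<in>B. bil a (x b) *s b) = 0" by (simp only: s_def)
    then have "a = (\<Sum>b\<in>B. bil a (x b) *s b)" by (rule right_minus_eq[THEN iffD1])
    moreover have "(\<Sum>b\<in>B. bil a (x b) *s b) \<in> vec.span B"
      by (intro vec.span_sum vec.span_scale vec.span_base)
    ultimately show False using aB by simp
  qed
  obtain e where e: "bil s e \<noteq> 0" using nondeg[OF s0] by blast
  define x' where "x' = e - (\<Sum>b\<in>B. bil b e *s x b)"
  have x'B: "bil b0 x' = 0" if "b0 \<in> B" for b0
  proof -
    have "bil b0 x' = bil b0 e - (\<Sum>b\<in>B. bil b e * bil b0 (x b))"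
      unfolding x'_def by (simp add: bil_diff2 bil_sum2 bil_smul2)
    also have "(\<Sum>b\<in>B. bil b e * bil b0 (x b)) = (\<Sum>b\<in>B. bil b e * (if b0 = b then 1 else 0))"
      by (rule sum.cong) (use x that in auto)
    also have "\<dots> = bil b0 e" by (rule sum_delta_mult[OF insert.hyps(1) that])
    finally show ?thesis by simp
  qed
  have sx': "bil s x' = bil s e"
  proof -
    have "bil s x' = bil s e - (\<Sum>b\<in>B. bil b e * bil s (x b))"
      unfolding x'_def by (simp add: bil_diff2 bil_sum2 bil_smul2)
    also have "(\<Sum>b\<in>B. bil b e * bil s (x b)) = 0"
      by (rule sum.neutral) (use sB in auto)
    finally show ?thesis by simp
  qed
  have ax': "bil a x' = bil s x'"
  proof -
    have eqa: "a = s + (\<Sum>b\<in>B. bil a (x b) *s b)" unfolding s_def by simp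
    have "bil a x' = bil (s + (\<Sum>b\<in>B. bil a (x b) *s b)) x'"
      using arg_cong[OF eqa, of "\<lambda>v. bil v x'"] .
    also have "\<dots> = bil s x' + (\<Sum>b\<in>B. bil a (x b) * bil b x')"
      by (simp add: bil_add1 bil_sum1 bil_smul1)
    finally have "bil a x' = bil s x' + (\<Sum>b\<in>B. bil a (x b) * bil b x')" .

    also have "(\<Sum>b\<in>B. bil a (x b) * bil b x') = 0"
      by (rule sum.neutral) (use x'B in auto)
    finally show ?thesis by simp
  qed
  define N where "N = bil a x'"
  have N0: "N \<noteq> 0" unfolding N_def using ax' sx' e by simp
  define xa where "xa = (1/N) *s x'"
  have axa: "bil a xa = 1" unfolding xa_def using N0 by (simp add: bil_smul2 N_def)
  have bxa: "bil b0 xa = 0" if "b0 \<in> B" for b0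
    unfolding xa_def using x'B[OF that] by (simp add: bil_smul2)
  define xn where "xn = (\<lambda>b. if b = a then xa else x b - bil a (x b) *s xa)"
  have "\<forall>b\<in>insert a B. \<forall>b'\<in>insert a B. bil b (xn b') = (if b = b' then 1 else 0)"
  proof (intro ballI)
    fix b b' assume b: "b \<in> insert a B" and b': "b' \<in> insert a B"
    show "bil b (xn b') = (if b = b' then 1 else 0)"
    proof (cases "b' = a")
      case True
      then show ?thesis using b axa bxa insert.hyps(2) by (auto simp: xn_def)
    next
      case False
      then have b'B: "b' \<in> B" using b' by simp
      have xnb': "xn b' = x b' - bil a (x b') *s xa" using False by (simp add: xn_def)
      show ?thesis
      proof (cases "b = a")
        case True
        then show ?thesis using False xnb' axa by (simp add: bil_diff2 bil_smul2)
      next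
        case False
        then have "b \<in> B" using b by simp
        then show ?thesis using xnb' bxa[of b] x b'B by (simp add: bil_diff2 bil_smul2)
      qed
    qed
  qed
  then show ?case by blast
qed



definition perpB :: "'a::field vec6 set \<Rightarrow> 'a vec6 set" where
  "perpB B = {x. \<forall>b\<in>B. bil b x = 0}"

lemma subspace_perpB: "vec.subspace (perpB B)"
  unfolding vec.subspace_def perpB_def by (simp add: bil_add2 bil_smul2)

lemma perp_dim:
  fixes B :: "'a::field vec6 set"
  assumes ind: "vec.independent B"
  shows "vec.dim (perpB B) + card B \<le> 6"
proof -
  have fin: "finite B" using ind vec.finiteI_independent by blast
  obtain x where x: "\<forall>b\<in>B. \<forall>b'\<in>B. bil b (x b') = (if b = b' then 1 else 0)"
    using dual_basis[OF fin ind] by blast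
  have inj: "inj_on x B"
  proof (rule inj_onI)
    fix b b' assume "b \<in> B" "b' \<in> B" "x b = x b'"
    then have "bil b (x b') = 1" using x by (metis (full_types))
    then show "b = b'" using x \<open>b \<in> B\<close> \<open>b' \<in> B\<close> by (metis zero_neq_one)
  qed
  have key: "(\<Sum>w\<in>x ` B. u w * bil b0 w) = u (x b0)" if "b0 \<in> B" for u b0
  proof -
    have "(\<Sum>w\<in>x ` B. u w * bil b0 w) = (\<Sum>b\<in>B. u (x b) * bil b0 (x b))"
      by (rule sum.reindex[OF inj, unfolded comp_def])
    also have "\<dots> = (\<Sum>b\<in>B. u (x b) * (if b0 = b then 1 else 0))"
      by (rule sum.cong) (use x that in auto)
    also have "\<dots> = u (x b0)" by (rule sum_delta_mult[OF fin that])
    finally show ?thesis .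
  qed
  have comb: "bil b0 (\<Sum>w\<in>x ` B. u w *s w) = u (x b0)" if "b0 \<in> B" for u b0
    using key[OF that, of u] by (simp add: bil_sum2 bil_smul2)
  have indx: "vec.independent (x ` B)"
    unfolding vec.independent_explicit
  proof (intro conjI allI impI ballI)
    show "finite (x ` B)" using fin by simp
    fix u w assume "(\<Sum>v\<in>x ` B. u v *s v) = 0" "w \<in> x ` B"
    then obtain b0 where "b0 \<in> B" "w = x b0" by blast
    then show "u w = 0" using comb[OF \<open>b0 \<in> B\<close>, of u] \<open>(\<Sum>v\<in>x ` B. u v *s v) = 0\<close> by simp
  qed
  define C where "C = vec.span (x ` B)"
  have dimC: "vec.dim C = card B"
    unfolding C_def using vec.dim_span_eq_card_independent[OF indx] card_image[OF inj] by simp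
  have int0: "perpB B \<inter> C \<subseteq> {0}"
  proof
    fix v assume v: "v \<in> perpB B \<inter> C"
    then have "v \<in> range (\<lambda>u. \<Sum>w\<in>x ` B. u w *s w)"
      unfolding C_def using vec.span_finite[of "x ` B"] fin by auto
    then obtain u where u: "v = (\<Sum>w\<in>x ` B. u w *s w)" by blast
    have "\<forall>w\<in>x ` B. u w = 0"
    proof
      fix w assume "w \<in> x ` B"
      then obtain b0 where "b0 \<in> B" "w = x b0" by blast
      then show "u w = 0" using comb[OF \<open>b0 \<in> B\<close>, of u] v u by (simp add: perpB_def)
    qed
    then have "(\<Sum>w\<in>x ` B. u w *s w) = 0" by (intro sum.neutral) simp
    then show "v \<in> {0}" using u by simp
  qed
  have "vec.dim (perpB B \<inter> C) = 0" using int0 by simp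
  moreover have "vec.dim {a + b |a b. a \<in> perpB B \<and> b \<in> C} + vec.dim (perpB B \<inter> C) = vec.dim (perpB B) + vec.dim C"
    by (rule vec.dim_sums_Int[OF subspace_perpB]) (simp add: C_def)
  moreover have "vec.dim {a + b |a b. a \<in> perpB B \<and> b \<in> C} \<le> 6"
    using dim_subset_UNIV_cart_gen[of "{a + b |a b. a \<in> perpB B \<and> b \<in> C}"] by simp
  ultimately show ?thesis using dimC by linarith
qed

lemma max_ts:
  assumes W: "vec.subspace W" "tsq W" "vec.dim W = 3" and v: "\<forall>w\<in>W. bil w v = 0"
  shows "v \<in> W"
proof -
  obtain B where B: "B \<subseteq> W" "vec.independent B" "W \<subseteq> vec.span B" "card B = vec.dim W"
    using vec.basis_exists by blast
  have sub: "W \<subseteq> perpB B"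
    unfolding perpB_def using B(1) tsq_bil[OF W(1,2)] by blast
  have "vec.dim (perpB B) \<le> 3" using perp_dim[OF B(2)] B(4) W(3) by simp
  then have "W = perpB B"
    using vec.subspace_dim_equal[OF W(1) subspace_perpB sub] W(3) by simp
  moreover have "v \<in> perpB B" unfolding perpB_def using v B(1) by blast
  ultimately show ?thesis by simp
qed

lemma span_insert_full:
  assumes "vec.subspace A" "vec.subspace C" "C \<subseteq> A" "v \<in> A" "v \<notin> C" "vec.dim A = vec.dim C + 1"
  shows "vec.span (insert v C) = A"
proof -
  have sub: "vec.span (insert v C) \<subseteq> A" using assms by (simp add: vec.span_minimal)
  have "vec.dim (vec.span (insert v C)) = vec.dim C + 1"
    using vec.dim_insert[of v C] assms(2,5) by (simp add: vec.span_eq_iff[THEN iffD2])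
  then show ?thesis using vec.subspace_dim_equal[OF vec.subspace_span assms(1) sub] assms(6) by simp
qed

lemma inter_eq:
  assumes "vec.subspace A" "vec.subspace B" "vec.subspace C" "vec.dim A = vec.dim C + 1"
    "vec.dim B = vec.dim C + 1" "C \<subseteq> A" "C \<subseteq> B" "A \<noteq> B"
  shows "A \<inter> B = C"
proof
  show "C \<subseteq> A \<inter> B" using assms by blast
  show "A \<inter> B \<subseteq> C"
  proof
    fix v assume v: "v \<in> A \<inter> B"
    show "v \<in> C"
    proof (rule ccontr)
      assume "v \<notin> C"
      then have "vec.span (insert v C) = A" "vec.span (insert v C) = B"
        using span_insert_full assms v by auto
      then show False using assms(8) by simp
    qed
  qed
qed



lemma sum_smul_shift:
  "(\<Sum>i\<in>A. a i *s (x i - b i *s y)) = (\<Sum>i\<in>A. a i *s x i) - (\<Sum>i\<in>A. a i * b i) *s (y::'a::field^'n)"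
  by (simp add: vec_eq_iff sum_subtractf sum_distrib_right right_diff_distrib mult.assoc)

lemma sum_in_sf: "is_subfield K \<Longrightarrow> (\<And>i. i \<in> A \<Longrightarrow> f i \<in> K) \<Longrightarrow> sum f A \<in> K"
proof (induction A rule: infinite_finite_induct)
  case (infinite A) then show ?case by (simp add: sf0)
next
  case empty then show ?case by (simp add: sf0)
next
  case (insert x F) then show ?case by (simp add: sfadd)
qed

lemma Kstrong:
  fixes v :: "nat \<Rightarrow> 'a::field vec6" and m :: nat and c :: "nat \<Rightarrow> 'a"
  assumes sf: "is_subfield F0"
  shows "(\<forall>i<m. v i \<in> coords_in F0) \<Longrightarrow> (\<Sum>i<m. c i *s v i) = 0 \<Longrightarrow>
    \<exists>(k::nat) \<gamma> d. (\<forall>l<k. (\<forall>i<m. d l i \<in> F0) \<and> (\<Sum>i<m. d l i *s v i) = 0) \<and>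
       (\<forall>i<m. c i = (\<Sum>l<k. \<gamma> l * d l i))"
proof (induction m arbitrary: v c)
  case 0 show ?case by (rule exI[where x="0::nat"]) simp
next
  case (Suc m)
  have rat: "\<forall>i<m. v i \<in> coords_in F0" and vm: "v m \<in> coords_in F0" using Suc.prems(1) by auto
  have rel: "(\<Sum>i<m. c i *s v i) + c m *s v m = 0" using Suc.prems(2) by simp
  show ?case
  proof (cases "v m = 0")
    case True
    then have "(\<Sum>i<m. c i *s v i) = 0" using rel by simp
    from Suc.IH[OF rat this] obtain k :: nat and \<gamma> d where
      H1: "\<forall>l<k. (\<forall>i<m. d l i \<in> F0) \<and> (\<Sum>i<m. d l i *s v i) = 0" and
      H2: "\<forall>i<m. c i = (\<Sum>l<k. \<gamma> l * d l i)" by blast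
    define d' where "d' = (\<lambda>l i. if l = k then (if i = m then 1 else 0) else (if i = m then 0 else d l i))"
    define \<gamma>' where "\<gamma>' = (\<lambda>l. if l = k then c m else \<gamma> l)"
    have A: "\<forall>l<Suc k. (\<forall>i<Suc m. d' l i \<in> F0) \<and> (\<Sum>i<Suc m. d' l i *s v i) = 0"
    proof (intro allI impI conjI)
      fix l i assume l: "l < Suc k" and i: "i < Suc m"
      show "d' l i \<in> F0" using H1 l i sf0[OF sf] sf1[OF sf] by (auto simp: d'_def)
    next
      fix l assume l: "l < Suc k"
      show "(\<Sum>i<Suc m. d' l i *s v i) = 0"
      proof (cases "l = k")
        case True
        have "(\<Sum>i<m. d' l i *s v i) = 0" by (rule sum.neutral) (simp add: d'_def True)
        then show ?thesis using \<open>v m = 0\<close> by simp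
      next
        case False
        then have "l < k" using l by simp
        have "(\<Sum>i<m. d' l i *s v i) = (\<Sum>i<m. d l i *s v i)" by (rule sum.cong) (auto simp: d'_def False)
        then show ?thesis using H1 \<open>l < k\<close> \<open>v m = 0\<close> by simp
      qed
    qed
    have B: "\<forall>i<Suc m. c i = (\<Sum>l<Suc k. \<gamma>' l * d' l i)"
    proof (intro allI impI)
      fix i assume i: "i < Suc m"
      have "(\<Sum>l<Suc k. \<gamma>' l * d' l i) = (\<Sum>l<k. \<gamma>' l * d' l i) + c m * d' k i"
        by (simp add: \<gamma>'_def)
      also have "(\<Sum>l<k. \<gamma>' l * d' l i) = (\<Sum>l<k. \<gamma> l * (if i = m then 0 else d l i))"
        by (rule sum.cong) (auto simp: \<gamma>'_def d'_def)
      finally show "c i = (\<Sum>l<Suc k. \<gamma>' l * d' l i)"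
        using H2 i by (cases "i = m") (auto simp: d'_def)
    qed
    show ?thesis using A B by blast
  next
    case False
    then obtain j where j: "v m $ j \<noteq> 0" by (metis vec_eq_iff zero_index)
    define p where "p = v m $ j"
    have p0: "p \<noteq> 0" using j p_def by simp
    define w where "w = (\<lambda>i. v i - (v i $ j / p) *s v m)"
    have ratw: "\<forall>i<m. w i \<in> coords_in F0"
    proof (intro allI impI)
      fix i assume "i < m"
      then have vi: "v i \<in> coords_in F0" using rat by simp
      have "v i $ j / p \<in> F0" using vi vm sfdiv[OF sf] unfolding p_def coords_in_def by simp
      then show "w i \<in> coords_in F0" unfolding w_def using rat_diff[OF sf vi] rat_smul[OF sf _ vm] by simp
    qed
    have relj: "(\<Sum>i<m. c i * v i $ j) + c m * p = 0"
      using arg_cong[OF rel, of "\<lambda>u. u $ j"] by (simp add: p_def)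
    have cm: "c m = - (\<Sum>i<m. c i * v i $ j) / p"
      using relj p0 by (simp add: field_simps eq_neg_iff_add_eq_0 add.commute)
    have relw: "(\<Sum>i<m. c i *s w i) = 0"
    proof -
      have "(\<Sum>i<m. c i *s w i) = (\<Sum>i<m. c i *s v i) - (\<Sum>i<m. c i * (v i $ j / p)) *s v m"
        unfolding w_def by (rule sum_smul_shift)
      also have "(\<Sum>i<m. c i *s v i) = - (c m *s v m)" using rel by (simp add: eq_neg_iff_add_eq_0)
      also have "(\<Sum>i<m. c i * (v i $ j / p)) = (\<Sum>i<m. c i * v i $ j) / p"
        by (simp add: sum_divide_distrib)
      also have "(\<Sum>i<m. c i * v i $ j) / p = - c m" using cm by simp
      finally show ?thesis by simp
    qed
    from Suc.IH[OF ratw relw] obtain k :: nat and \<gamma> d where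
      H1: "\<forall>l<k. (\<forall>i<m. d l i \<in> F0) \<and> (\<Sum>i<m. d l i *s w i) = 0" and
      H2: "\<forall>i<m. c i = (\<Sum>l<k. \<gamma> l * d l i)" by blast
    define d' where "d' = (\<lambda>l i. if i = m then - (\<Sum>i'<m. d l i' * v i' $ j) / p else d l i)"
    have A: "\<forall>l<k. (\<forall>i<Suc m. d' l i \<in> F0) \<and> (\<Sum>i<Suc m. d' l i *s v i) = 0"
    proof (intro allI impI conjI)
      fix l i assume l: "l < k" and i: "i < Suc m"
      show "d' l i \<in> F0"
      proof (cases "i = m")
        case True
        have "(\<Sum>i'<m. d l i' * v i' $ j) \<in> F0"
        proof (rule sum_in_sf[OF sf])
          fix i' assume "i' \<in> {..<m}"
          then show "d l i' * v i' $ j \<in> F0"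
            using H1 l rat sfmul[OF sf] unfolding coords_in_def by simp
        qed
        moreover have "p \<in> F0" using vm unfolding p_def coords_in_def by simp
        ultimately show ?thesis using True sfdiv[OF sf] sfneg[OF sf] by (simp add: d'_def)
      next
        case False then show ?thesis using H1 l i by (simp add: d'_def)
      qed
    next
      fix l assume l: "l < k"
      have "(\<Sum>i<m. d l i *s w i) = (\<Sum>i<m. d l i *s v i) - (\<Sum>i<m. d l i * (v i $ j / p)) *s v m"
        unfolding w_def by (rule sum_smul_shift)
      then have e1: "(\<Sum>i<m. d l i *s v i) = ((\<Sum>i<m. d l i * v i $ j) / p) *s v m"
        using H1 l by (simp add: sum_divide_distrib)
      have "(\<Sum>i<Suc m. d' l i *s v i) = (\<Sum>i<m. d' l i *s v i) + d' l m *s v m" by simp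
      also have "(\<Sum>i<m. d' l i *s v i) = (\<Sum>i<m. d l i *s v i)" by (rule sum.cong) (auto simp: d'_def)
      also have "d' l m = - ((\<Sum>i<m. d l i * v i $ j) / p)" by (simp add: d'_def)
      finally show "(\<Sum>i<Suc m. d' l i *s v i) = 0" unfolding e1 by (simp add: vec_eq_iff)
    qed
    have B: "\<forall>i<Suc m. c i = (\<Sum>l<k. \<gamma> l * d' l i)"
    proof (intro allI impI)
      fix i assume i: "i < Suc m"
      show "c i = (\<Sum>l<k. \<gamma> l * d' l i)"
      proof (cases "i = m")
        case False
        then show ?thesis using H2 i by (simp add: d'_def)
      next
        case True
        have "(\<Sum>l<k. \<gamma> l * d' l m) = (\<Sum>l<k. - (\<gamma> l * (\<Sum>i'<m. d l i' * v i' $ j)) / p)"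
          by (rule sum.cong) (simp_all add: d'_def)
        also have "\<dots> = - (\<Sum>l<k. \<gamma> l * (\<Sum>i'<m. d l i' * v i' $ j)) / p"
          by (simp add: sum_divide_distrib[symmetric] sum_negf)
        also have "(\<Sum>l<k. \<gamma> l * (\<Sum>i'<m. d l i' * v i' $ j)) = (\<Sum>l<k. \<Sum>i'<m. \<gamma> l * (d l i' * v i' $ j))"
          by (simp add: sum_distrib_left)
        also have "\<dots> = (\<Sum>i'<m. \<Sum>l<k. \<gamma> l * (d l i' * v i' $ j))"
          by (rule sum.swap)
        also have "\<dots> = (\<Sum>i'<m. (\<Sum>l<k. \<gamma> l * d l i') * v i' $ j)"
          by (simp add: sum_distrib_right mult.assoc)
        also have "\<dots> = (\<Sum>i'<m. c i' * v i' $ j)" using H2 by (intro sum.cong) auto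
        finally show ?thesis using cm True by simp
      qed
    qed
    show ?thesis using A B by blast
  qed
qed



lemma Kweak:
  fixes v :: "nat \<Rightarrow> 'a::field vec6" and m :: nat and c :: "nat \<Rightarrow> 'a"
  assumes sf: "is_subfield F0" and rat: "\<forall>i<m. v i \<in> coords_in F0"
    and rel: "(\<Sum>i<m. c i *s v i) = 0" and i0: "i0 < m" "c i0 \<noteq> 0"
  shows "\<exists>d. (\<forall>i<m. d i \<in> F0) \<and> (\<Sum>i<m. d i *s v i) = 0 \<and> d i0 \<noteq> 0"
proof -
  obtain k :: nat and \<gamma> d where
      H1: "\<forall>l<k. (\<forall>i<m. d l i \<in> F0) \<and> (\<Sum>i<m. d l i *s v i) = 0" and
      H2: "\<forall>i<m. c i = (\<Sum>l<k. \<gamma> l * d l i)"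
    using Kstrong[OF sf rat rel] by blast
  have "(\<Sum>l<k. \<gamma> l * d l i0) \<noteq> 0" using H2 i0 by simp
  then obtain l where l: "l < k" "d l i0 \<noteq> 0"
    by (metis (mono_tags, lifting) lessThan_iff mult_zero_right sum.neutral)
  then show ?thesis using H1 by blast
qed

lemma family_dep:
  fixes v :: "nat \<Rightarrow> 'a::field vec6"
  assumes S: "vec.subspace S" and vS: "\<forall>j<m. v j \<in> S" and d: "vec.dim S < m"
  shows "\<exists>c. (\<Sum>j<m. c j *s v j) = 0 \<and> (\<exists>j<m. c j \<noteq> 0)"
proof (cases "inj_on v {..<m}")
  case False
  then obtain i j where ij: "i < m" "j < m" "i \<noteq> j" "v i = v j"
    unfolding inj_on_def by auto
  define c where "c = (\<lambda>t. if t = i then (1::'a) else if t = j then -1 else 0)"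
  have "(\<Sum>t<m. c t *s v t) = (\<Sum>t<m. (if t = i then v i else 0) + (if t = j then - v j else 0))"
    by (rule sum.cong) (auto simp: c_def ij(3))
  also have "\<dots> = v i - v j" using ij by (simp add: sum.distrib)
  finally show ?thesis using ij by (intro exI[of _ c]) (auto simp: c_def)
next
  case True
  define V where "V = v ` {..<m}"
  have cardV: "card V = m" unfolding V_def using card_image[OF True] by simp
  have VS: "V \<subseteq> S" unfolding V_def using vS by auto
  have "\<not> vec.independent V"
  proof
    assume "vec.independent V"
    then have "card V \<le> vec.dim S" using vec.independent_card_le_dim[OF VS] by blast
    then show False using cardV d by simp
  qed
  moreover have "finite V" unfolding V_def by simp
  ultimately obtain u w where u: "(\<Sum>x\<in>V. u x *s x) = 0" "w \<in> V" "u w \<noteq> 0"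
    unfolding vec.independent_explicit by blast
  have "(\<Sum>j<m. u (v j) *s v j) = (\<Sum>x\<in>V. u x *s x)"
    unfolding V_def by (rule sum.reindex[OF True, unfolded comp_def, symmetric])
  moreover obtain j where "j < m" "w = v j" using u(2) unfolding V_def by auto
  ultimately show ?thesis using u by (intro exI[of _ "\<lambda>j. u (v j)"]) auto
qed

definition dotv :: "'a::field vec6 \<Rightarrow> 'a vec6 \<Rightarrow> 'a" where
  "dotv a x = a$0 * x$0 + a$1 * x$1 + a$2 * x$2 + a$3 * x$3 + a$4 * x$4 + a$5 * x$5"

definition nat6 :: "6 \<Rightarrow> nat" where
  "nat6 i = (if i = 0 then 0 else if i = 1 then 1 else if i = 2 then 2 else if i = 3 then 3 else if i = 4 then 4 else 5)"

lemma sum_lt6: "(\<Sum>j<(6::nat). h j) = h 0 + h 1 + h 2 + h 3 + h 4 + (h 5::'a::comm_monoid_add)"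
  by (simp add: numeral_eq_Suc add.assoc)

lemma nat6_lt: "nat6 i < 6" by (simp add: nat6_def)

lemma of_nat6: "of_nat (nat6 i) = i"
proof -
  have "i = 0 \<or> i = 1 \<or> i = 2 \<or> i = 3 \<or> i = 4 \<or> i = 5" using univ6 by auto
  then show ?thesis by (auto simp: nat6_def)
qed

lemma dot_expand: "(\<Sum>j<(6::nat). x$(of_nat j) * a$(of_nat j)) = dotv a x"
  by (simp add: sum_lt6 dotv_def algebra_simps)

lemma dot_expand2: "(\<Sum>j<(6::nat). f j * a$(of_nat j)) = dotv a (\<chi> i. f (nat6 i))"
  by (simp add: sum_lt6 dotv_def nat6_def algebra_simps)

lemma hom_sol:
  fixes a :: "6 \<Rightarrow> 'a::field vec6"
  assumes sf: "is_subfield F0" and ra: "\<forall>k. a k \<in> coords_in F0"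
    and sol: "\<forall>k. dotv (a k) y = 0" and y0: "y \<noteq> 0"
  shows "\<exists>x \<in> coords_in F0. x \<noteq> 0 \<and> (\<forall>k. dotv (a k) x = 0)"
proof -
  define v where "v = (\<lambda>j::nat. (\<chi> k. a k $ (of_nat j)) :: 'a vec6)"
  have rat: "\<forall>j<6. v j \<in> coords_in F0" using ra unfolding v_def coords_in_def by simp
  have rel: "(\<Sum>j<6. (y $ of_nat j) *s v j) = 0"
    using sol by (simp add: vec_eq_iff v_def dot_expand)
  obtain i where "y $ i \<noteq> 0" using y0 by (metis vec_eq_iff zero_index)
  then have c0: "y $ of_nat (nat6 i) \<noteq> 0" by (simp add: of_nat6)
  obtain d where d: "\<forall>j<6. d j \<in> F0" "(\<Sum>j<6. d j *s v j) = 0" "d (nat6 i) \<noteq> 0"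
    using Kweak[OF sf rat rel nat6_lt c0] by blast
  define x :: "'a vec6" where "x = (\<chi> i. d (nat6 i))"
  have "x \<in> coords_in F0" using d(1) nat6_lt unfolding x_def coords_in_def by simp
  moreover have "x \<noteq> 0" using d(3) unfolding x_def by (metis vec_lambda_beta zero_index)
  moreover have "\<forall>k. dotv (a k) x = 0"
  proof
    fix k
    have "(\<Sum>j<6. d j *s v j) $ k = 0" using d(2) by simp
    then show "dotv (a k) x = 0" unfolding x_def by (simp add: v_def dot_expand2)
  qed
  ultimately show ?thesis by blast
qed

lemma inhom_sol:
  fixes a :: "6 \<Rightarrow> 'a::field vec6" and \<beta> :: "6 \<Rightarrow> 'a"
  assumes sf: "is_subfield F0" and ra: "\<forall>k. a k \<in> coords_in F0" and rb: "\<forall>k. \<beta> k \<in> F0"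
    and sol: "\<forall>k. dotv (a k) y = \<beta> k"
  shows "\<exists>x \<in> coords_in F0. \<forall>k. dotv (a k) x = \<beta> k"
proof -
  define v where "v = (\<lambda>j::nat. if j = 6 then (\<chi> k. - \<beta> k) else (\<chi> k. a k $ (of_nat j)) :: 'a vec6)"
  have rat: "\<forall>j<7. v j \<in> coords_in F0" using ra rb sfneg[OF sf] unfolding v_def coords_in_def by simp
  define c where "c = (\<lambda>j::nat. if j = 6 then 1 else y $ of_nat j)"
  have s7: "(\<Sum>j<7. c j *s v j) = (\<Sum>j<6. c j *s v j) + c 6 *s v 6"
    by (simp add: numeral_eq_Suc)
  have s6: "(\<Sum>j<6. c j *s v j) = (\<Sum>j<6. (y $ of_nat j) *s (\<chi> k. a k $ (of_nat j)))"
    by (rule sum.cong) (simp_all add: c_def v_def)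
  have rel: "(\<Sum>j<7. c j *s v j) = 0"
    unfolding s7 s6 using sol by (simp add: vec_eq_iff v_def c_def dot_expand)
  have "\<exists>d. (\<forall>j<7. d j \<in> F0) \<and> (\<Sum>j<7. d j *s v j) = 0 \<and> d 6 \<noteq> 0"
    using Kweak[OF sf rat rel, of 6] by (simp add: c_def)
  then obtain d where d: "\<forall>j<7. d j \<in> F0" "(\<Sum>j<7. d j *s v j) = 0" "d 6 \<noteq> 0"
    by blast
  define x :: "'a vec6" where "x = (\<chi> i. d (nat6 i) / d 6)"
  have "x \<in> coords_in F0"
  proof -
    have "d (nat6 i) / d 6 \<in> F0" for i
    proof -
      have "nat6 i < 7" using nat6_lt[of i] by simp
      then show ?thesis using d(1) sfdiv[OF sf] by simp
    qed
    then show ?thesis unfolding x_def coords_in_def by simp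
  qed
  moreover have "\<forall>k. dotv (a k) x = \<beta> k"
  proof
    fix k
    have s7': "(\<Sum>j<7. d j *s v j) = (\<Sum>j<6. d j *s v j) + d 6 *s v 6"
      by (simp add: numeral_eq_Suc)
    have s6': "(\<Sum>j<6. d j *s v j) = (\<Sum>j<6. d j *s (\<chi> k. a k $ (of_nat j)))"
      by (rule sum.cong) (simp_all add: v_def)
    have "(\<Sum>j<6. d j * a k $ of_nat j) - d 6 * \<beta> k = 0"
      using arg_cong[OF d(2), of "\<lambda>u. u $ k"] unfolding s7' s6' by (simp add: v_def)
    then have "dotv (a k) (\<chi> i. d (nat6 i)) = d 6 * \<beta> k" by (simp add: dot_expand2)
    then show "dotv (a k) x = \<beta> k" using d(3) unfolding x_def
      by (simp add: dotv_def field_simps)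
  qed
  ultimately show ?thesis by blast
qed



lemma nat6_of: "j < 6 \<Longrightarrow> nat6 (of_nat j) = j"
proof -
  assume "j < 6"
  then have "j = 0 \<or> j = 1 \<or> j = 2 \<or> j = 3 \<or> j = 4 \<or> j = 5" by auto
  then show ?thesis by (auto simp: nat6_def)
qed

lemma rat_kernel:
  fixes a :: "6 \<Rightarrow> 'a::field vec6"
  assumes sf: "is_subfield F0" and ra: "\<forall>k. a k \<in> coords_in F0" and a5: "a 5 = 0"
  shows "\<exists>x \<in> coords_in F0. x \<noteq> 0 \<and> (\<forall>k. dotv (a k) x = 0)"
proof -
  define S :: "'a vec6 set" where "S = {z. z $ 5 = 0}"
  have subS: "vec.subspace S" unfolding S_def vec.subspace_def by simp
  have "axis 5 1 \<notin> S" unfolding S_def by simp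
  then have "S \<noteq> UNIV" by blast
  have "vec.dim (UNIV :: 'a vec6 set) = CARD(6)" by (rule vec_dim_card)
  then have dU: "vec.dim (UNIV :: 'a vec6 set) = 6" by simp
  have dS: "vec.dim S < 6"
  proof (rule ccontr)
    assume "\<not> vec.dim S < 6"
    then have "vec.dim (UNIV :: 'a vec6 set) \<le> vec.dim S" using dU by simp
    then have "S = UNIV" using vec.subspace_dim_equal[OF subS vec.subspace_UNIV subset_UNIV] by simp
    then show False using \<open>S \<noteq> UNIV\<close> by simp
  qed
  define v where "v = (\<lambda>j::nat. (\<chi> k. a k $ (of_nat j)) :: 'a vec6)"
  have vS: "\<forall>j<6. v j \<in> S" unfolding v_def S_def using a5 by simp
  obtain c where c: "(\<Sum>j<6. c j *s v j) = 0" "\<exists>j<6. c j \<noteq> 0"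
    using family_dep[OF subS vS dS] by blast
  define y :: "'a vec6" where "y = (\<chi> i. c (nat6 i))"
  obtain j0 where j0: "j0 < 6" "c j0 \<noteq> 0" using c(2) by blast
  have "y $ of_nat j0 = c j0" unfolding y_def using nat6_of[OF j0(1)] by simp
  then have y0: "y \<noteq> 0" using j0 by (metis zero_index)
  have "\<forall>k. dotv (a k) y = 0"
  proof
    fix k
    have "(\<Sum>j<6. c j *s v j) $ k = 0" using c(1) by simp
    then show "dotv (a k) y = 0" unfolding y_def by (simp add: v_def dot_expand2)
  qed
  then show ?thesis using hom_sol[OF sf ra _ y0] by blast
qed

definition Jv :: "'a::field vec6 \<Rightarrow> 'a vec6" where
  "Jv r = (\<chi> i. if i = 0 then r$1 else if i = 1 then r$0 else if i = 2 then r$3 else if i = 3 then r$2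
      else if i = 4 then r$5 else r$4)"

lemma dot_Jv: "dotv (Jv r) x = bil r x"
  by (simp add: dotv_def Jv_def bil_def)

lemma dot_axis: "dotv (axis j 1) x = x $ j"
proof -
  have "j = 0 \<or> j = 1 \<or> j = 2 \<or> j = 3 \<or> j = 4 \<or> j = 5" using univ6 by auto
  then show ?thesis by (auto simp: dotv_def axis_def)
qed

lemma rat_Jv: "is_subfield K \<Longrightarrow> r \<in> coords_in K \<Longrightarrow> Jv r \<in> coords_in K"
  unfolding coords_in_def Jv_def by simp

lemma rat_axis: "is_subfield K \<Longrightarrow> axis j 1 \<in> coords_in K"
  unfolding coords_in_def axis_def by (simp add: sf0 sf1)

lemma rat5:
  assumes sf: "is_subfield F0" and r: "r1 \<in> coords_in F0" "r2 \<in> coords_in F0" "r3 \<in> coords_in F0"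
    "r4 \<in> coords_in F0" "r5 \<in> coords_in F0"
  shows "\<exists>x \<in> coords_in F0. x \<noteq> 0 \<and> dotv r1 x = 0 \<and> dotv r2 x = 0 \<and> dotv r3 x = 0 \<and>
     dotv r4 x = 0 \<and> dotv r5 x = 0"
proof -
  define a :: "6 \<Rightarrow> 'a vec6" where "a = (\<lambda>k. if k = 0 then r1 else if k = 1 then r2 else if k = 2 then r3
    else if k = 3 then r4 else if k = 4 then r5 else 0)"
  have ra: "\<forall>k. a k \<in> coords_in F0" unfolding a_def using r rat_zero[OF sf] by simp
  have a5: "a 5 = 0" by (simp add: a_def)
  obtain x where x: "x \<in> coords_in F0" "x \<noteq> 0" "\<forall>k. dotv (a k) x = 0"
    using rat_kernel[OF sf ra a5] by blast
  have "dotv (a 0) x = 0" "dotv (a 1) x = 0" "dotv (a 2) x = 0" "dotv (a 3) x = 0" "dotv (a 4) x = 0"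
    using x(3) by blast+
  then show ?thesis using x(1,2) by (intro bexI[of _ x]) (simp_all add: a_def)
qed

lemma indep2: "u \<noteq> 0 \<Longrightarrow> v \<notin> vec.span {u} \<Longrightarrow> vec.independent {u,v} \<and> u \<noteq> v"
proof -
  assume u: "u \<noteq> 0" and v: "v \<notin> vec.span {u}"
  have "v \<noteq> u" using v vec.span_base[of u "{u}"] by auto
  moreover have "vec.independent {u}" using u by simp
  ultimately have "vec.independent (insert v {u})" using v vec.independent_insert[of v "{u}"] by simp
  then show ?thesis using \<open>v \<noteq> u\<close> by (simp add: insert_commute)
qed

lemma dim2: "u \<noteq> 0 \<Longrightarrow> v \<notin> vec.span {u} \<Longrightarrow> vec.dim (vec.span {u,v}) = 2"
  using indep2 vec.dim_span_eq_card_independent by fastforce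

lemma span2: "x \<in> vec.span {u,v} \<Longrightarrow> \<exists>a b. x = a *s u + b *s v"
proof -
  assume "x \<in> vec.span {u,v}"
  then obtain k where "x - k *s u \<in> vec.span {v}" using vec.span_breakdown_eq by blast
  then obtain b where "x - k *s u = b *s v" using vec.span_singleton by blast
  then have "x = k *s u + b *s v" by (metis add_diff_cancel_left' diff_add_cancel add.commute)
  then show ?thesis by blast
qed

lemma perp_span: "(\<forall>u\<in>B. bil u x = 0) \<Longrightarrow> w \<in> vec.span B \<Longrightarrow> bil w x = 0"
proof -
  assume a: "\<forall>u\<in>B. bil u x = 0" and w: "w \<in> vec.span B"
  have "vec.subspace {u. bil u x = 0}" unfolding vec.subspace_def by (simp add: bil_add1 bil_smul1)
  then have "vec.span B \<subseteq> {u. bil u x = 0}" using a by (intro vec.span_minimal) auto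
  then show ?thesis using w by auto
qed



lemma step1:
  assumes sf: "is_subfield F0" and r: "r1 \<in> coords_in F0" "r2 \<in> coords_in F0"
  shows "\<exists>s \<in> coords_in F0. qform s = 0 \<and> bil r1 s = 0 \<and> bil r2 s = 0 \<and> s \<notin> vec.span {r1, r2}"
proof -
  let ?R = "vec.span {r1, r2}"
  have ax: "\<And>j. axis j 1 \<in> coords_in F0" using rat_axis[OF sf] by blast
  have J: "Jv r1 \<in> coords_in F0" "Jv r2 \<in> coords_in F0" using rat_Jv[OF sf] r by auto
  obtain s1 where s1: "s1 \<in> coords_in F0" "s1 \<noteq> 0" "s1$1 = 0" "s1$3 = 0" "s1$5 = 0"
     "bil r1 s1 = 0" "bil r2 s1 = 0"
    using rat5[OF sf ax[of 1] ax[of 3] ax[of 5] J] by (auto simp: dot_axis dot_Jv)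
  obtain s2 where s2: "s2 \<in> coords_in F0" "s2 \<noteq> 0" "s2$0 = 0" "s2$2 = 0" "s2$4 = 0"
     "bil r1 s2 = 0" "bil r2 s2 = 0"
    using rat5[OF sf ax[of 0] ax[of 2] ax[of 4] J] by (auto simp: dot_axis dot_Jv)
  have q1: "qform s1 = 0" using s1 by (simp add: qform_def)
  have q2: "qform s2 = 0" using s2 by (simp add: qform_def)
  show ?thesis
  proof (cases "s1 \<in> ?R")
    case False then show ?thesis using s1 q1 by blast
  next
    case s1R: True
    show ?thesis
    proof (cases "s2 \<in> ?R")
      case False then show ?thesis using s2 q2 by blast
    next
      case s2R: True
      have s1ns2: "s1 \<notin> vec.span {s2}"
      proof
        assume "s1 \<in> vec.span {s2}"
        then obtain k where "s1 = k *s s2" using vec.span_singleton by blast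
        then have "s1 = 0" using s1 s2 by (simp add: vec6_eq)
        then show False using s1 by simp
      qed
      have ind: "vec.independent {s2, s1}" using indep2[OF s2(2) s1ns2] by blast
      have d2: "vec.dim (vec.span {s2, s1}) = 2" using dim2[OF s2(2) s1ns2] .
      have "vec.dim ?R \<le> card {r1, r2}" by (rule vec.dim_le_card) auto
      also have "card {r1, r2} \<le> 2" by (simp add: card_insert_le_m1)
      finally have dR: "vec.dim ?R \<le> 2" .
      have sub: "vec.span {s2, s1} \<subseteq> ?R" using s1R s2R by (intro vec.span_minimal) auto
      have Req: "vec.span {s2, s1} = ?R"
        using vec.subspace_dim_equal[OF vec.subspace_span vec.subspace_span sub] d2 dR by simp
      obtain j where j: "j = 0 \<or> j = 2 \<or> j = 4" "s1 $ j \<noteq> 0"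
        using s1 by (auto simp: vec6_nz)
      have Js2: "Jv s2 \<in> coords_in F0" using rat_Jv[OF sf s2(1)] .
      obtain s3 where s3: "s3 \<in> coords_in F0" "s3 \<noteq> 0" "s3$1 = 0" "s3$3 = 0" "s3$5 = 0"
         "bil s2 s3 = 0" "s3 $ j = 0"
        using rat5[OF sf ax[of 1] ax[of 3] ax[of 5] Js2 ax[of j]] by (auto simp: dot_axis dot_Jv)
      have q3: "qform s3 = 0" using s3 by (simp add: qform_def)
      have "bil s1 s3 = 0" using s1 s3 by (simp add: bil_def)
      then have perp: "\<forall>u\<in>{s2, s1}. bil u s3 = 0" using s3 by simp
      have "r1 \<in> ?R" "r2 \<in> ?R" by (simp_all add: vec.span_base)
      then have b12: "bil r1 s3 = 0" "bil r2 s3 = 0" using perp_span[OF perp] Req by auto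
      have "s3 \<notin> ?R"
      proof
        assume "s3 \<in> ?R"
        then obtain a b where ab: "s3 = a *s s2 + b *s s1" using span2 Req by blast
        have "a * s2$1 = 0" "a * s2$3 = 0" "a * s2$5 = 0"
          using arg_cong[OF ab, of "\<lambda>u. u$1"] arg_cong[OF ab, of "\<lambda>u. u$3"]
            arg_cong[OF ab, of "\<lambda>u. u$5"] s1 s3 by simp_all
        moreover have "s2$1 \<noteq> 0 \<or> s2$3 \<noteq> 0 \<or> s2$5 \<noteq> 0" using s2 by (auto simp: vec6_nz)
        ultimately have a0: "a = 0" by auto
        then have "b * s1 $ j = 0" using arg_cong[OF ab, of "\<lambda>u. u$j"] s3 by simp
        then have "b = 0" using j by simp
        then have "s3 = 0" using ab a0 by simp
        then show False using s3 by simp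
      qed
      then show ?thesis using s3 q3 b12 by blast
    qed
  qed
qed

lemma dotv_zero: "dotv 0 x = 0" by (simp add: dotv_def)

lemma G3:
  assumes sf: "is_subfield F0" and Y: "vec.subspace Y" "vec.dim Y = 3" "tsq Y"
    and r: "r1 \<in> coords_in F0" "r2 \<in> coords_in F0" "r1 \<in> Y" "r2 \<in> Y" "r1 \<noteq> 0" "r2 \<notin> vec.span {r1}"
  shows "\<exists>r3 \<in> coords_in F0. r3 \<in> Y \<and> r3 \<notin> vec.span {r1, r2}"
proof -
  define R where "R = vec.span {r1, r2}"
  have subR: "vec.subspace R" unfolding R_def by simp
  have RY: "R \<subseteq> Y" unfolding R_def using r Y by (intro vec.span_minimal) auto
  have dR: "vec.dim R = 2" unfolding R_def using dim2[OF r(5,6)] by (simp add: insert_commute)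
  have spanR: "vec.span R = R" unfolding R_def by simp
  obtain s where s: "s \<in> coords_in F0" "qform s = 0" "bil r1 s = 0" "bil r2 s = 0" "s \<notin> R"
    using step1[OF sf r(1,2)] unfolding R_def by blast
  have perpR: "bil u x = 0" if "u \<in> R" "bil r1 x = 0" "bil r2 x = 0" for u x
    using perp_span[of "{r1,r2}" x u] that unfolding R_def by auto
  show ?thesis
  proof (cases "s \<in> Y")
    case True then show ?thesis using s unfolding R_def by blast
  next
    case sY: False
    obtain y where y: "y \<in> Y" "y \<notin> R"
    proof -
      have "\<not> Y \<subseteq> R"
      proof
        assume "Y \<subseteq> R"
        then have "vec.dim Y \<le> vec.dim R" by (rule vec.dim_subset)
        then show False using dR Y(2) by simp
      qed
      then show ?thesis using that by blast
    qed
    define U where "U = vec.span (insert s R)"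
    have Udecomp: "\<exists>\<rho> k. \<rho> \<in> R \<and> x = \<rho> + k *s s" if xU: "x \<in> U" for x
    proof -
      obtain k where "x - k *s s \<in> vec.span R" using xU unfolding U_def vec.span_breakdown_eq by blast
      then have "x - k *s s \<in> R" using spanR by simp
      then show ?thesis by (intro exI[of _ "x - k *s s"] exI[of _ k]) simp
    qed
    have subU: "vec.subspace U" unfolding U_def by simp
    have tsqU: "tsq U"
      unfolding tsq_def
    proof
      fix x assume "x \<in> U"
      then obtain \<rho> k where rk: "\<rho> \<in> R" "x = \<rho> + k *s s" using Udecomp by blast
      have "qform \<rho> = 0" using rk(1) RY Y(3) unfolding tsq_def by auto
      moreover have "bil \<rho> s = 0" using perpR[OF rk(1) s(3,4)] .
      ultimately show "qform x = 0" using rk(2) s(2) by (simp add: q_add q_smul bil_smul2)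
    qed
    have dU: "vec.dim U = 3"
      unfolding U_def using vec.dim_insert[of s R] s(5) spanR dR by simp
    have perpU: "\<forall>u\<in>U. bil u x = 0" if "bil s x = 0" "bil r1 x = 0" "bil r2 x = 0" for x
    proof
      fix u assume "u \<in> U"
      then obtain \<rho> k where rk: "\<rho> \<in> R" "u = \<rho> + k *s s" using Udecomp by blast
      show "bil u x = 0" using rk perpR[OF rk(1) that(2,3)] that(1) by (simp add: bil_add1 bil_smul1)
    qed
    have yr: "bil r1 y = 0" "bil r2 y = 0"
      using tsq_bil[OF Y(1) Y(3)] r(3,4) y(1) by auto
    have ys: "bil s y \<noteq> 0"
    proof
      assume "bil s y = 0"
      then have "y \<in> U" using max_ts[OF subU tsqU dU] perpU yr by blast
      then obtain \<rho> k where rk: "\<rho> \<in> R" "y = \<rho> + k *s s" using Udecomp by blast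
      have k0: "k \<noteq> 0" using rk y(2) by auto
      have "y - \<rho> \<in> Y" using y(1) rk(1) RY Y(1) vec.subspace_diff by blast
      moreover have "y - \<rho> = k *s s" using rk(2) by simp
      ultimately have "(1/k) *s (k *s s) \<in> Y" using Y(1) vec.subspace_scale by metis
      then have "s \<in> Y" using k0 by simp
      then show False using sY by simp
    qed
    define a :: "6 \<Rightarrow> 'a vec6" where
      "a = (\<lambda>k. if k = 0 then Jv r1 else if k = 1 then Jv r2 else if k = 2 then Jv s else 0)"
    define \<beta> :: "6 \<Rightarrow> 'a" where "\<beta> = (\<lambda>k. if k = 2 then 1 else 0)"
    have ra: "\<forall>k. a k \<in> coords_in F0"
      unfolding a_def using rat_Jv[OF sf] r(1,2) s(1) rat_zero[OF sf] by simp
    have rb: "\<forall>k. \<beta> k \<in> F0" unfolding \<beta>_def using sf0[OF sf] sf1[OF sf] by simp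
    define y' where "y' = (1 / bil s y) *s y"
    have sol: "\<forall>k. dotv (a k) y' = \<beta> k"
      unfolding all6 a_def \<beta>_def y'_def using yr ys
      by (simp add: dot_Jv bil_smul2 dotv_zero)
    obtain t where t: "t \<in> coords_in F0" "\<forall>k. dotv (a k) t = \<beta> k"
      using inhom_sol[OF sf ra rb sol] by blast
    have tb: "bil r1 t = 0" "bil r2 t = 0" "bil s t = 1"
      using t(2)[rule_format, of 0] t(2)[rule_format, of 1] t(2)[rule_format, of 2]
      by (simp_all add: a_def \<beta>_def dot_Jv)
    define t' where "t' = t - qform t *s s"
    have rt': "t' \<in> coords_in F0"
      unfolding t'_def using rat_diff[OF sf t(1) rat_smul[OF sf rat_q[OF sf t(1)] s(1)]] .
    have ss: "bil s s = 0" using bil_self[of s] s(2) by simp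
    have tb': "bil r1 t' = 0" "bil r2 t' = 0" "bil s t' = 1"
      unfolding t'_def using tb s(3,4) ss by (simp_all add: bil_diff2 bil_smul2)
    have qt': "qform t' = 0"
    proof -
      have "bil t s = 1" using tb(3) bil_sym by metis
      then show ?thesis unfolding t'_def using s(2)
        by (simp add: q_diff q_smul bil_smul2)
    qed
    have t't': "bil t' t' = 0" using bil_self[of t'] qt' by simp
    define al where "al = bil y t'"
    define be where "be = bil y s"
    have be0: "be \<noteq> 0" unfolding be_def using ys bil_sym by metis
    define z where "z = y - al *s s - be *s t'"
    have zb: "bil s z = 0" "bil t' z = 0" "bil r1 z = 0" "bil r2 z = 0"
    proof -
      have st': "bil t' s = 1" using tb'(3) bil_sym by metis
      show "bil s z = 0" unfolding z_def be_def using ss tb'(3)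
        by (simp add: bil_diff2 bil_smul2 bil_sym)
      show "bil t' z = 0" unfolding z_def al_def using st' t't'
        by (simp add: bil_diff2 bil_smul2 bil_sym)
      show "bil r1 z = 0" unfolding z_def using yr s(3) tb'(1) by (simp add: bil_diff2 bil_smul2)
      show "bil r2 z = 0" unfolding z_def using yr s(4) tb'(2) by (simp add: bil_diff2 bil_smul2)
    qed
    have "z \<in> U" using max_ts[OF subU tsqU dU] perpU zb by blast
    then obtain \<rho> k where rk: "\<rho> \<in> R" "z = \<rho> + k *s s" using Udecomp by blast
    have "bil \<rho> t' = 0" using perpR[OF rk(1) tb'(1,2)] .
    then have "bil t' z = k" using rk(2) tb'(3) by (simp add: bil_add2 bil_smul2 bil_sym)
    then have "k = 0" using zb(2) by simp
    then have zR: "z \<in> R" using rk by simp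
    have qz: "qform z = 0" using zR RY Y(3) unfolding tsq_def by auto
    have zst: "bil z s = 0" "bil z t' = 0" using zb(1,2) bil_sym by metis+
    have yeq: "y = z + (al *s s + be *s t')" unfolding z_def by simp
    have "qform y = qform z + qform (al *s s + be *s t') + bil z (al *s s + be *s t')"
      using yeq q_add by metis
    also have "bil z (al *s s + be *s t') = 0" using zst by (simp add: bil_add2 bil_smul2)
    also have "qform (al *s s + be *s t') = al * be"
      using s(2) qt' tb'(3) by (simp add: q_add q_smul bil_smul1 bil_smul2)
    finally have "qform y = al * be" using qz by simp
    moreover have "qform y = 0" using y(1) Y(3) unfolding tsq_def by auto
    ultimately have "al = 0" using be0 by simp
    then have "y - z = be *s t'" using yeq by simp
    moreover have "y - z \<in> Y" using y(1) zR RY Y(1) vec.subspace_diff by blast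
    ultimately have "(1/be) *s (be *s t') \<in> Y" using Y(1) vec.subspace_scale by metis
    then have t'Y: "t' \<in> Y" using be0 by simp
    have "t' \<notin> R"
    proof
      assume "t' \<in> R"
      then have "bil t' s = 0" using perpR s(3,4) by blast
      then show False using tb'(3) bil_sym by (metis zero_neq_one)
    qed
    then show ?thesis using rt' t'Y unfolding R_def by blast
  qed
qed



definition good :: "'a::field set \<Rightarrow> 'a vec6 set \<Rightarrow> bool" where
  "good F0 Y \<longleftrightarrow> vec.subspace Y \<and> vec.dim Y = 3 \<and> tsq Y \<and>
     (\<exists>u v. u \<in> Y \<and> v \<in> Y \<and> u \<in> coords_in F0 \<and> v \<in> coords_in F0 \<and> u \<noteq> 0 \<and> v \<notin> vec.span {u})"

lemma good_basis:
  assumes sf: "is_subfield F0" and g: "good F0 W"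
  obtains a b c where "a \<in> coords_in F0" "b \<in> coords_in F0" "c \<in> coords_in F0"
    "\<And>x. x \<in> W \<Longrightarrow> \<exists>\<alpha> \<beta> \<gamma>. x = \<alpha> *s a + \<beta> *s b + \<gamma> *s c"
    "\<And>\<alpha> \<beta> \<gamma>. \<alpha> *s a + \<beta> *s b + \<gamma> *s c = 0 \<Longrightarrow> \<alpha> = 0 \<and> \<beta> = 0 \<and> \<gamma> = 0"
    "a \<in> W" "b \<in> W" "c \<in> W"
proof -
  obtain u v where uv: "u \<in> W" "v \<in> W" "u \<in> coords_in F0" "v \<in> coords_in F0" "u \<noteq> 0" "v \<notin> vec.span {u}"
    and W: "vec.subspace W" "vec.dim W = 3" "tsq W"
    using g unfolding good_def by blast
  obtain c where c: "c \<in> coords_in F0" "c \<in> W" "c \<notin> vec.span {u, v}"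
    using G3[OF sf W(1,2,3) uv(3,4,1,2,5,6)] by blast
  have d2: "vec.dim (vec.span {u,v}) = 2" using dim2[OF uv(5,6)] .
  have "vec.dim (insert c {u,v}) = 3"
    using vec.dim_insert[of c "{u,v}"] c(3) d2 by simp
  then have d3: "vec.dim (vec.span (insert c {u,v})) = 3" by simp
  have sub: "vec.span (insert c {u,v}) \<subseteq> W" using uv c W by (intro vec.span_minimal) auto
  have Weq: "vec.span (insert c {u,v}) = W"
    using vec.subspace_dim_equal[OF vec.subspace_span W(1) sub] d3 W(2) by simp
  have rep: "\<exists>\<alpha> \<beta> \<gamma>. x = \<alpha> *s u + \<beta> *s v + \<gamma> *s c" if "x \<in> W" for x
  proof -
    have "x \<in> vec.span (insert c {u,v})" using that Weq by simp
    then obtain k where "x - k *s c \<in> vec.span {u,v}" unfolding vec.span_breakdown_eq by blast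
    then obtain a b where "x - k *s c = a *s u + b *s v" using span2 by blast
    then have "x = a *s u + b *s v + k *s c" by (simp add: diff_eq_eq)
    then show ?thesis by blast
  qed
  have ind: "\<alpha> = 0 \<and> \<beta> = 0 \<and> \<gamma> = 0" if e: "\<alpha> *s u + \<beta> *s v + \<gamma> *s c = 0" for \<alpha> \<beta> \<gamma>
  proof -
    have g0: "\<gamma> = 0"
    proof (rule ccontr)
      assume g: "\<gamma> \<noteq> 0"
      from e have "\<gamma> *s c = - (\<alpha> *s u + \<beta> *s v)" by (simp only: add_eq_0_iff)
      then have "(1/\<gamma>) *s (\<gamma> *s c) = (1/\<gamma>) *s (- (\<alpha> *s u + \<beta> *s v))" by simp
      then have "c = (1/\<gamma>) *s (- (\<alpha> *s u + \<beta> *s v))" using g by simp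
      moreover have "(1/\<gamma>) *s (- (\<alpha> *s u + \<beta> *s v)) \<in> vec.span {u, v}"
        by (intro vec.span_scale vec.span_neg vec.span_add vec.span_base) auto
      ultimately show False using c(3) by simp
    qed
    have b0: "\<beta> = 0"
    proof (rule ccontr)
      assume b: "\<beta> \<noteq> 0"
      have "\<alpha> *s u + \<beta> *s v = 0" using e g0 by simp
      then have "\<beta> *s v = - (\<alpha> *s u)" by (simp only: add_eq_0_iff)
      then have "(1/\<beta>) *s (\<beta> *s v) = (1/\<beta>) *s (- (\<alpha> *s u))" by simp
      then have "v = (1/\<beta>) *s (- (\<alpha> *s u))" using b by simp
      moreover have "(1/\<beta>) *s (- (\<alpha> *s u)) \<in> vec.span {u}"
        by (intro vec.span_scale vec.span_neg vec.span_base) auto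
      ultimately show False using uv(6) by simp
    qed
    have "\<alpha> *s u = 0" using e g0 b0 by simp
    then have "\<alpha> = 0" using uv(5) vec.scale_eq_0_iff by blast
    then show ?thesis using g0 b0 by simp
  qed
  show ?thesis using that[OF uv(3,4) c(1) rep ind uv(1,2) c(2)] .
qed



lemma caseB:
  assumes sf: "is_subfield F0" and Y: "vec.subspace Y" "vec.dim Y = 3" "tsq Y" and ngY: "\<not> good F0 Y"
    and Z1: "vec.subspace Z1" "Z1 \<subseteq> Y" and Z2: "vec.subspace Z2" "vec.dim Z2 = 2" "Z2 \<subseteq> Y"
    and X: "Z1 \<inter> Z2 = X"
    and r1: "r1 \<in> Z1" "r1 \<in> coords_in F0" "r1 \<noteq> 0" "r1 \<notin> X"
    and W: "good F0 W" "Z2 \<subseteq> W"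
  shows False
proof -
  obtain u v where uv: "u \<in> W" "v \<in> W" "u \<in> coords_in F0" "v \<in> coords_in F0" "u \<noteq> 0" "v \<notin> vec.span {u}"
    and Ws: "vec.subspace W" "vec.dim W = 3" "tsq W"
    using W(1) unfolding good_def by blast
  have WY: "W \<noteq> Y" using W(1) ngY by blast
  have WYZ: "W \<inter> Y = Z2" by (rule inter_eq) (use Ws Y Z2 WY W(2) in auto)
  have r1Y: "r1 \<in> Y" using r1(1) Z1(2) by blast
  have r1W: "r1 \<notin> W"
  proof
    assume "r1 \<in> W"
    then have "r1 \<in> Z2" using WYZ r1Y by blast
    then show False using r1 X by blast
  qed
  obtain s where s: "s \<in> W" "s \<in> coords_in F0" "s \<noteq> 0" "bil r1 s = 0"
  proof (cases "bil r1 u = 0")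
    case True then show ?thesis using that uv by blast
  next
    case False
    define s where "s = bil r1 v *s u - bil r1 u *s v"
    have "s \<in> W" unfolding s_def using Ws(1) uv(1,2)
      by (simp add: vec.subspace_diff vec.subspace_scale)
    moreover have "s \<in> coords_in F0" unfolding s_def
      using rat_diff[OF sf rat_smul[OF sf rat_bil[OF sf r1(2) uv(4)] uv(3)] rat_smul[OF sf rat_bil[OF sf r1(2) uv(3)] uv(4)]] .
    moreover have "bil r1 s = 0" unfolding s_def by (simp add: bil_diff2 bil_smul2 mult.commute)
    moreover have "s \<noteq> 0"
    proof
      assume "s = 0"
      then have "bil r1 u *s v = bil r1 v *s u" unfolding s_def by simp
      then have "(1 / bil r1 u) *s (bil r1 u *s v) = (1 / bil r1 u) *s (bil r1 v *s u)" by simp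
      then have "v = (bil r1 v / bil r1 u) *s u" using False by simp
      then have "v \<in> vec.span {u}" by (metis vec.span_base vec.span_scale singletonI)
      then show False using uv(6) by simp
    qed
    ultimately show ?thesis using that by blast
  qed
  have sZ2: "s \<in> Z2"
  proof (rule ccontr)
    assume sn: "s \<notin> Z2"
    have Weq: "vec.span (insert s Z2) = W"
      by (rule span_insert_full) (use Ws Z2 W(2) s(1) sn in auto)
    have "\<forall>w\<in>W. bil w r1 = 0"
    proof
      fix w assume "w \<in> W"
      then have "w \<in> vec.span (insert s Z2)" using Weq by simp
      then obtain k where "w - k *s s \<in> vec.span Z2" unfolding vec.span_breakdown_eq by blast
      moreover have "vec.span Z2 = Z2" using Z2(1) by (simp add: vec.span_eq_iff)
      ultimately have z: "w - k *s s \<in> Z2" by simp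
      have "bil (w - k *s s) r1 = 0" using tsq_bil[OF Y(1) Y(3)] z Z2(3) r1Y by blast
      moreover have "bil (w - k *s s) r1 = bil w r1 - k * bil s r1" by (simp add: bil_diff1 bil_smul1)
      moreover have "bil s r1 = 0" using s(4) bil_sym by metis
      ultimately show "bil w r1 = 0" by simp
    qed
    then have "r1 \<in> W" using max_ts[OF Ws(1,3,2)] by blast
    then show False using r1W by simp
  qed
  have "s \<notin> vec.span {r1}"
  proof
    assume "s \<in> vec.span {r1}"
    then obtain k where k: "s = k *s r1" using vec.span_singleton by blast
    then have "k \<noteq> 0" using s(3) by auto
    then have "r1 = (1/k) *s s" using k by simp
    then have "r1 \<in> Z2" using sZ2 Z2(1) vec.subspace_scale by metis
    then show False using r1 X by blast
  qed
  then have "good F0 Y" unfolding good_def using Y r1Y r1(2,3) s(2) sZ2 Z2(3) by blast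
  then show False using ngY by simp
qed

lemma lt6: "(i::nat) < 6 \<longleftrightarrow> i = 0 \<or> i = 1 \<or> i = 2 \<or> i = 3 \<or> i = 4 \<or> i = 5"
  by presburger

lemma all_lt6: "(\<forall>i<(6::nat). P i) \<longleftrightarrow> P 0 \<and> P 1 \<and> P 2 \<and> P 3 \<and> P 4 \<and> P 5"
  unfolding lt6 by blast

lemma caseC:
  assumes sf: "is_subfield F0" and Y: "vec.subspace Y" "vec.dim Y = 3" "tsq Y" and ngY: "\<not> good F0 Y"
    and Z1: "vec.subspace Z1" "vec.dim Z1 = 2" "Z1 \<subseteq> Y"
    and Z2: "vec.subspace Z2" "vec.dim Z2 = 2" "Z2 \<subseteq> Y" and Z12: "Z1 \<noteq> Z2"
    and X: "Z1 \<inter> Z2 = X" "vec.dim X = 1"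
    and nC1: "\<not> (\<exists>v\<in>X. v \<in> coords_in F0 \<and> v \<noteq> 0)"
    and W1: "good F0 W1" "Z1 \<subseteq> W1" and W2: "good F0 W2" "Z2 \<subseteq> W2"
  shows False
proof -
  have W1s: "vec.subspace W1" "vec.dim W1 = 3" "tsq W1" using W1(1) unfolding good_def by blast+
  have W2s: "vec.subspace W2" "vec.dim W2 = 3" "tsq W2" using W2(1) unfolding good_def by blast+
  have W1Y: "W1 \<inter> Y = Z1" by (rule inter_eq) (use W1s Y Z1 W1 ngY in auto)
  have W2Y: "W2 \<inter> Y = Z2" by (rule inter_eq) (use W2s Y Z2 W2 ngY in auto)
  obtain a1 b1 c1 where B1: "a1 \<in> coords_in F0" "b1 \<in> coords_in F0" "c1 \<in> coords_in F0"
    "\<And>x. x \<in> W1 \<Longrightarrow> \<exists>\<alpha> \<beta> \<gamma>. x = \<alpha> *s a1 + \<beta> *s b1 + \<gamma> *s c1"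
    "\<And>\<alpha> \<beta> \<gamma>. \<alpha> *s a1 + \<beta> *s b1 + \<gamma> *s c1 = 0 \<Longrightarrow> \<alpha> = 0 \<and> \<beta> = 0 \<and> \<gamma> = 0"
    "a1 \<in> W1" "b1 \<in> W1" "c1 \<in> W1"
    using good_basis[OF sf W1(1)] by blast
  obtain a2 b2 c2 where B2: "a2 \<in> coords_in F0" "b2 \<in> coords_in F0" "c2 \<in> coords_in F0"
    "\<And>x. x \<in> W2 \<Longrightarrow> \<exists>\<alpha> \<beta> \<gamma>. x = \<alpha> *s a2 + \<beta> *s b2 + \<gamma> *s c2"
    "\<And>\<alpha> \<beta> \<gamma>. \<alpha> *s a2 + \<beta> *s b2 + \<gamma> *s c2 = 0 \<Longrightarrow> \<alpha> = 0 \<and> \<beta> = 0 \<and> \<gamma> = 0"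
    "a2 \<in> W2" "b2 \<in> W2" "c2 \<in> W2"
    using good_basis[OF sf W2(1)] by blast
  obtain x0 where x0: "x0 \<in> X" "x0 \<noteq> 0"
  proof -
    have "\<not> X \<subseteq> {0}" using X(2) vec.dim_eq_0[of X] by auto
    then show ?thesis using that by blast
  qed
  have x0W: "x0 \<in> W1" "x0 \<in> W2" using x0(1) X(1) W1(2) W2(2) by blast+
  obtain \<alpha>1 \<alpha>2 \<alpha>3 where al: "x0 = \<alpha>1 *s a1 + \<alpha>2 *s b1 + \<alpha>3 *s c1" using B1(4)[OF x0W(1)] by blast
  obtain \<beta>1 \<beta>2 \<beta>3 where be: "x0 = \<beta>1 *s a2 + \<beta>2 *s b2 + \<beta>3 *s c2" using B2(4)[OF x0W(2)] by blast
  define v where "v = (\<lambda>i::nat. if i = 0 then a1 else if i = 1 then b1 else if i = 2 then c1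
     else if i = 3 then a2 else if i = 4 then b2 else c2)"
  define c where "c = (\<lambda>i::nat. if i = 0 then \<alpha>1 else if i = 1 then \<alpha>2 else if i = 2 then \<alpha>3
     else if i = 3 then - \<beta>1 else if i = 4 then - \<beta>2 else - \<beta>3)"
  have rat: "\<forall>i<6. v i \<in> coords_in F0" unfolding all_lt6 v_def using B1 B2 by simp
  have rel: "(\<Sum>i<6. c i *s v i) = 0"
  proof -
    have "(\<Sum>i<6. c i *s v i) = \<alpha>1 *s a1 + \<alpha>2 *s b1 + \<alpha>3 *s c1 + (- \<beta>1) *s a2 + (- \<beta>2) *s b2 + (- \<beta>3) *s c2"
      unfolding sum_lt6 by (simp add: c_def v_def)
    also have "\<dots> = (\<alpha>1 *s a1 + \<alpha>2 *s b1 + \<alpha>3 *s c1) - (\<beta>1 *s a2 + \<beta>2 *s b2 + \<beta>3 *s c2)"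
      by (simp add: vec.scale_minus_left)
    also have "\<dots> = 0" using al be by simp
    finally show ?thesis .
  qed
  obtain i0 where i0: "i0 < 3" "c i0 \<noteq> 0"
  proof -
    have "\<alpha>1 \<noteq> 0 \<or> \<alpha>2 \<noteq> 0 \<or> \<alpha>3 \<noteq> 0" using al x0(2) by auto
    moreover have "c 0 = \<alpha>1" "c 1 = \<alpha>2" "c 2 = \<alpha>3" by (simp_all add: c_def)
    ultimately show ?thesis using that[of 0] that[of 1] that[of 2] by auto
  qed
  have i06: "i0 < 6" using i0(1) by simp
  obtain d where d: "\<forall>i<6. d i \<in> F0" "(\<Sum>i<6. d i *s v i) = 0" "d i0 \<noteq> 0"
    using Kweak[OF sf rat rel i06 i0(2)] by blast
  define w where "w = d 0 *s a1 + d 1 *s b1 + d 2 *s c1"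
  have wrel: "w + (d 3 *s a2 + d 4 *s b2 + d 5 *s c2) = 0"
    using d(2) unfolding sum_lt6 w_def by (simp add: v_def add.assoc)
  have wW1: "w \<in> W1" unfolding w_def using W1s(1) B1(6,7,8)
    by (simp add: vec.subspace_add vec.subspace_scale)
  have "d 3 *s a2 + d 4 *s b2 + d 5 *s c2 \<in> W2" using W2s(1) B2(6,7,8)
    by (simp add: vec.subspace_add vec.subspace_scale)
  then have m: "- (d 3 *s a2 + d 4 *s b2 + d 5 *s c2) \<in> W2" using vec.subspace_neg[OF W2s(1)] by blast
  have "w = - (d 3 *s a2 + d 4 *s b2 + d 5 *s c2)" using wrel by (rule add_eq_0_iff2[THEN iffD1])
  then have wW2: "w \<in> W2" using m by simp
  have dF: "d 0 \<in> F0" "d 1 \<in> F0" "d 2 \<in> F0" using d(1) unfolding all_lt6 by simp_all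
  have wrat: "w \<in> coords_in F0" unfolding w_def
    using rat_add[OF sf rat_add[OF sf rat_smul[OF sf dF(1) B1(1)] rat_smul[OF sf dF(2) B1(2)]] rat_smul[OF sf dF(3) B1(3)]] .
  have w0: "w \<noteq> 0"
  proof
    assume "w = 0"
    then have "d 0 = 0 \<and> d 1 = 0 \<and> d 2 = 0" using B1(5) unfolding w_def by blast
    moreover have "i0 = 0 \<or> i0 = 1 \<or> i0 = 2" using i0(1) by presburger
    ultimately show False using d(3) by auto
  qed
  obtain z2 where z2: "z2 \<in> Z2" "z2 \<notin> Z1"
  proof -
    have "\<not> Z2 \<subseteq> Z1"
    proof
      assume "Z2 \<subseteq> Z1"
      then have "Z2 = Z1" using vec.subspace_dim_equal[OF Z2(1) Z1(1)] Z1(2) Z2(2) by simp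
      then show False using Z12 by simp
    qed
    then show ?thesis using that by blast
  qed
  have Yeq: "vec.span (insert z2 Z1) = Y"
    by (rule span_insert_full) (use Y Z1 z2 Z2(3) in auto)
  have spZ1: "vec.span Z1 = Z1" using Z1(1) by (simp add: vec.span_eq_iff)
  have "\<forall>y\<in>Y. bil y w = 0"
  proof
    fix y assume "y \<in> Y"
    then have "y \<in> vec.span (insert z2 Z1)" using Yeq by simp
    then obtain k where "y - k *s z2 \<in> vec.span Z1" unfolding vec.span_breakdown_eq by blast
    then have z: "y - k *s z2 \<in> Z1" using spZ1 by simp
    have "bil (y - k *s z2) w = 0" using tsq_bil[OF W1s(1) W1s(3)] z W1(2) wW1 by blast
    moreover have "bil z2 w = 0" using tsq_bil[OF W2s(1) W2s(3)] z2(1) W2(2) wW2 by blast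
    moreover have "bil (y - k *s z2) w = bil y w - k * bil z2 w" by (simp add: bil_diff1 bil_smul1)
    ultimately show "bil y w = 0" by simp
  qed
  then have "w \<in> Y" using max_ts[OF Y(1,3,2)] by blast
  then have "w \<in> X" using W1Y W2Y wW1 wW2 X(1) by blast
  then show False using nC1 wrat w0 by blast
qed



definition P0 :: "'a::field set \<Rightarrow> 'a vec6 set set" where
  "P0 F0 = {Z. vec.subspace Z \<and> vec.dim Z = 2 \<and> tsq Z \<and>
      ((\<exists>v\<in>Z. v \<in> coords_in F0 \<and> v \<noteq> 0) \<or> (\<exists>Y. good F0 Y \<and> Z \<subseteq> Y))}"

lemma P0_sub: "P0 F0 \<subseteq> grass_points" by (auto simp: P0_def pts_iff)

lemma closure:
  assumes sf: "is_subfield F0" and X: "vec.subspace X" "vec.dim X = 1"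
    and Y: "vec.subspace Y" "vec.dim Y = 3" "tsq Y" "X \<subseteq> Y"
    and Z1: "Z1 \<in> P0 F0" "X \<subseteq> Z1" "Z1 \<subseteq> Y" and Z2: "Z2 \<in> P0 F0" "X \<subseteq> Z2" "Z2 \<subseteq> Y"
    and Z12: "Z1 \<noteq> Z2"
    and Z: "Z \<in> grass_points" "X \<subseteq> Z" "Z \<subseteq> Y"
  shows "Z \<in> P0 F0"
proof -
  have Zs: "vec.subspace Z" "vec.dim Z = 2" "tsq Z" using Z(1) by (auto simp: pts_iff)
  have Z1s: "vec.subspace Z1" "vec.dim Z1 = 2" "tsq Z1" using Z1(1) by (auto simp: P0_def)
  have Z2s: "vec.subspace Z2" "vec.dim Z2 = 2" "tsq Z2" using Z2(1) by (auto simp: P0_def)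
  have X12: "Z1 \<inter> Z2 = X" by (rule inter_eq) (use X Z1s Z2s Z1 Z2 Z12 in auto)
  show ?thesis
  proof (cases "\<exists>v\<in>X. v \<in> coords_in F0 \<and> v \<noteq> 0")
    case True
    then show ?thesis using Zs Z(2) unfolding P0_def by blast
  next
    case nC1: False
    show ?thesis
    proof (cases "good F0 Y")
      case True
      then show ?thesis using Zs Z(3) unfolding P0_def by blast
    next
      case ngY: False
      have R1: "(\<exists>v\<in>Z1. v \<in> coords_in F0 \<and> v \<noteq> 0) \<or> (\<exists>W. good F0 W \<and> Z1 \<subseteq> W)"
        using Z1(1) unfolding P0_def by blast
      have R2: "(\<exists>v\<in>Z2. v \<in> coords_in F0 \<and> v \<noteq> 0) \<or> (\<exists>W. good F0 W \<and> Z2 \<subseteq> W)"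
        using Z2(1) unfolding P0_def by blast
      have X21: "Z2 \<inter> Z1 = X" using X12 by blast
      have False
      proof (cases "\<exists>v\<in>Z1. v \<in> coords_in F0 \<and> v \<noteq> 0")
        case True
        then obtain r1 where r1: "r1 \<in> Z1" "r1 \<in> coords_in F0" "r1 \<noteq> 0" by blast
        have r1X: "r1 \<notin> X" using nC1 r1 by blast
        show False
        proof (cases "\<exists>v\<in>Z2. v \<in> coords_in F0 \<and> v \<noteq> 0")
          case True
          then obtain r2 where r2: "r2 \<in> Z2" "r2 \<in> coords_in F0" "r2 \<noteq> 0" by blast
          have "r2 \<notin> Z1" using nC1 r2 X12 by blast
          moreover have "vec.span {r1} \<subseteq> Z1" using r1(1) Z1s(1) by (intro vec.span_minimal) auto
          ultimately have "r2 \<notin> vec.span {r1}" by blast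
          then have "good F0 Y" unfolding good_def using Y r1 r2 Z1(3) Z2(3) by blast
          then show False using ngY by simp
        next
          case False
          then obtain W where "good F0 W" "Z2 \<subseteq> W" using R2 by blast
          then show False using caseB[OF sf Y(1,2,3) ngY Z1s(1) Z1(3) Z2s(1,2) Z2(3) X12 r1 r1X] by blast
        qed
      next
        case False
        then obtain W1 where W1: "good F0 W1" "Z1 \<subseteq> W1" using R1 by blast
        show False
        proof (cases "\<exists>v\<in>Z2. v \<in> coords_in F0 \<and> v \<noteq> 0")
          case True
          then obtain r2 where r2: "r2 \<in> Z2" "r2 \<in> coords_in F0" "r2 \<noteq> 0" by blast
          have r2X: "r2 \<notin> X" using nC1 r2 by blast
          show False using caseB[OF sf Y(1,2,3) ngY Z2s(1) Z2(3) Z1s(1,2) Z1(3) X21 r2 r2X W1] .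
        next
          case False
          then obtain W2 where W2: "good F0 W2" "Z2 \<subseteq> W2" using R2 by blast
          show False using caseC[OF sf Y(1,2,3) ngY Z1s(1,2) Z1(3) Z2s(1,2) Z2(3) Z12 X12 X(2) nC1 W1 W2] .
        qed
      qed
      then show ?thesis by simp
    qed
  qed
qed

lemma geom_P0: assumes sf: "is_subfield F0" shows "geom_subspace (P0 F0)"
  unfolding geom_subspace_def
proof (intro conjI ballI impI)
  show "P0 F0 \<subseteq> grass_points" by (rule P0_sub)
  fix l assume l: "l \<in> grass_lines" and ex: "\<exists>x y. x \<noteq> y \<and> x \<in> l \<inter> P0 F0 \<and> y \<in> l \<inter> P0 F0"
  obtain X Y where XY: "l = {Z \<in> grass_points. X \<subseteq> Z \<and> Z \<subseteq> Y}" "X \<in> ts_subspaces UNIV 1"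
    "Y \<in> ts_subspaces UNIV 3" "X \<subseteq> Y"
    using l unfolding grass_lines_def by blast
  have Xs: "vec.subspace X" "vec.dim X = 1" using XY(2) by (auto simp: ts_UNIV)
  have Ys: "vec.subspace Y" "vec.dim Y = 3" "tsq Y" using XY(3) by (auto simp: ts_UNIV)
  obtain Z1 Z2 where Z: "Z1 \<noteq> Z2" "Z1 \<in> l" "Z1 \<in> P0 F0" "Z2 \<in> l" "Z2 \<in> P0 F0" using ex by blast
  show "l \<subseteq> P0 F0"
  proof
    fix Z assume "Z \<in> l"
    then show "Z \<in> P0 F0" using closure[OF sf Xs Ys XY(4), of Z1 Z2 Z] Z XY(1) by blast
  qed
qed



lemma proper:
  fixes F0 :: "'a::field set"
  assumes sf: "is_subfield F0" and ne: "F0 \<noteq> UNIV"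
  shows "\<exists>Z0 \<in> grass_points. Z0 \<notin> P0 F0"
proof -
  obtain \<alpha> :: 'a where al: "\<alpha> \<notin> F0" using ne by blast
  have al0: "\<alpha> \<noteq> 0" using al sf0[OF sf] by auto
  define z1 :: "'a vec6" where "z1 = (\<chi> i. if i = 0 then 1 else if i = 2 then \<alpha> else 0)"
  define z2 :: "'a vec6" where "z2 = (\<chi> i. if i = 1 then \<alpha> else if i = 3 then -1 else if i = 4 then 1 else 0)"
  have z1c: "z1$0 = 1" "z1$1 = 0" "z1$2 = \<alpha>" "z1$3 = 0" "z1$4 = 0" "z1$5 = 0" by (simp_all add: z1_def)
  have z2c: "z2$0 = 0" "z2$1 = \<alpha>" "z2$2 = 0" "z2$3 = -1" "z2$4 = 1" "z2$5 = 0" by (simp_all add: z2_def)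
  define Z0 where "Z0 = vec.span {z1, z2}"
  have z10: "z1 \<noteq> 0" using z1c by (auto simp: vec6_nz)
  have z2n: "z2 \<notin> vec.span {z1}"
  proof
    assume "z2 \<in> vec.span {z1}"
    then obtain k where "z2 = k *s z1" using vec.span_singleton by blast
    then have "z2 $ 4 = k * z1 $ 4" by simp
    then show False using z1c z2c by simp
  qed
  have dZ: "vec.dim Z0 = 2" unfolding Z0_def using dim2[OF z10 z2n] .
  have rep: "\<exists>a b. x = a *s z1 + b *s z2" if "x \<in> Z0" for x using span2 that unfolding Z0_def by blast
  have tZ: "tsq Z0" unfolding tsq_def
  proof
    fix x assume "x \<in> Z0"
    then obtain a b where x: "x = a *s z1 + b *s z2" using rep by blast
    show "qform x = 0" unfolding x qform_def using z1c z2c by (simp add: algebra_simps)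
  qed
  have Zp: "Z0 \<in> grass_points" unfolding pts_iff Z0_def using dZ tZ unfolding Z0_def by simp
  have notrat: False if vZ: "v \<in> Z0" and vF: "v \<in> coords_in F0" and vn: "v \<noteq> 0" for v
  proof -
    obtain a b where v: "v = a *s z1 + b *s z2" using rep vZ by blast
    have vc: "v$0 = a" "v$1 = b * \<alpha>" "v$2 = a * \<alpha>" "v$4 = b" "v$3 = - b" "v$5 = 0"
      unfolding v using z1c z2c by simp_all
    have inF: "v$0 \<in> F0" "v$1 \<in> F0" "v$2 \<in> F0" "v$4 \<in> F0" using vF unfolding coords_in_def by auto
    have a0: "a = 0"
    proof (rule ccontr)
      assume "a \<noteq> 0"
      then have "\<alpha> = (a * \<alpha>) / a" by simp
      then have "\<alpha> \<in> F0" using sfdiv[OF sf, of "a * \<alpha>" a] inF vc by simp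
      then show False using al by simp
    qed
    have b0: "b = 0"
    proof (rule ccontr)
      assume "b \<noteq> 0"
      then have "\<alpha> = (b * \<alpha>) / b" by simp
      then have "\<alpha> \<in> F0" using sfdiv[OF sf, of "b * \<alpha>" b] inF vc by simp
      then show False using al by simp
    qed
    show False using v a0 b0 vn by simp
  qed
  have perpform: "u$0 = 0 \<and> u$1 = 0 \<and> u$3 = 0 \<and> u$5 = u$2"
    if "u \<in> coords_in F0" "bil u z1 = 0" "bil u z2 = 0" for u
  proof -
    have uF: "\<And>i. u$i \<in> F0" using that(1) unfolding coords_in_def by auto
    have e1: "u$1 + \<alpha> * u$3 = 0" using that(2) z1c by (simp add: bil_def algebra_simps)
    have e2: "\<alpha> * u$0 - u$2 + u$5 = 0" using that(3) z2c by (simp add: bil_def algebra_simps)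
    have u3: "u$3 = 0"
    proof (rule ccontr)
      assume "u$3 \<noteq> 0"
      then have "\<alpha> = (- u$1) / u$3" using e1 by (simp add: field_simps add_eq_0_iff)
      then have "\<alpha> \<in> F0" using sfdiv[OF sf sfneg[OF sf uF] uF] by simp
      then show False using al by simp
    qed
    have u0: "u$0 = 0"
    proof (rule ccontr)
      assume "u$0 \<noteq> 0"
      then have "\<alpha> = (u$2 - u$5) / u$0" using e2 by (simp add: field_simps)
      then have "\<alpha> \<in> F0" using sfdiv[OF sf sfdiff[OF sf uF uF] uF] by simp
      then show False using al by simp
    qed
    show ?thesis using e1 e2 u3 u0 by simp
  qed
  have notgood: False if gY: "good F0 Y" and ZY: "Z0 \<subseteq> Y" for Y
  proof -
    obtain u v where uv: "u \<in> Y" "v \<in> Y" "u \<in> coords_in F0" "v \<in> coords_in F0" "u \<noteq> 0" "v \<notin> vec.span {u}"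
      and Ys: "vec.subspace Y" "vec.dim Y = 3" "tsq Y"
      using gY unfolding good_def by blast
    have zY: "z1 \<in> Y" "z2 \<in> Y" using ZY unfolding Z0_def by (auto intro: vec.span_base)
    have bb: "bil u z1 = 0" "bil u z2 = 0" "bil v z1 = 0" "bil v z2 = 0" "bil u v = 0"
      using tsq_bil[OF Ys(1) Ys(3)] uv zY by blast+
    have qq: "qform u = 0" "qform v = 0" using Ys(3) uv unfolding tsq_def by auto
    have pu: "u$0 = 0 \<and> u$1 = 0 \<and> u$3 = 0 \<and> u$5 = u$2" using perpform[OF uv(3) bb(1,2)] .
    have pv: "v$0 = 0 \<and> v$1 = 0 \<and> v$3 = 0 \<and> v$5 = v$2" using perpform[OF uv(4) bb(3,4)] .
    have e1: "u$4 * u$2 = 0" using qq(1) pu by (simp add: qform_def)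
    have e2: "v$4 * v$2 = 0" using qq(2) pv by (simp add: qform_def)
    have e3: "u$4 * v$2 + u$2 * v$4 = 0" using bb(5) pu pv by (simp add: bil_def algebra_simps)
    have nz: "u$2 \<noteq> 0 \<or> u$4 \<noteq> 0" using uv(5) pu by (auto simp: vec6_eq)
    obtain k where k: "v = k *s u"
    proof (cases "u$2 = 0")
      case False
      then have "u$4 = 0" using e1 by simp
      then have "v$4 = 0" using e3 False by simp
      then have "v = (v$2 / u$2) *s u" using pu pv False \<open>u$4 = 0\<close> by (simp add: vec6_eq)
      then show ?thesis using that by blast
    next
      case True
      then have u4: "u$4 \<noteq> 0" using nz by simp
      then have "v$2 = 0" using e3 True by simp
      then have "v = (v$4 / u$4) *s u" using pu pv True u4 by (simp add: vec6_eq)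
      then show ?thesis using that by blast
    qed
    then have "v \<in> vec.span {u}" by (simp add: vec.span_base vec.span_scale)
    then show False using uv(6) by simp
  qed
  have "Z0 \<notin> P0 F0" unfolding P0_def using notrat notgood by blast
  then show ?thesis using Zp by blast
qed

lemma kspan_sup: "S \<subseteq> kspan K S" unfolding kspan_def by blast

lemma L_rat:
  assumes "L \<in> ts_subspaces F0 2"
  shows "\<exists>v\<in>L. v \<in> coords_in F0 \<and> v \<noteq> 0"
proof -
  obtain B where B: "is_ksubspace F0 L" "card B = 2" "kspan F0 B = L"
    using assms unfolding ts_subspaces_def kdim_subspace_def by blast
  have LF: "L \<subseteq> coords_in F0" using B(1) unfolding is_ksubspace_def by blast
  have BL: "B \<subseteq> L" using kspan_sup[of B F0] B(3) by simp
  obtain b1 b2 where "b1 \<in> B" "b2 \<in> B" "b1 \<noteq> b2" using B(2) by (metis card_2_iff insertI1 insert_commute)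
  then obtain b where "b \<in> B" "b \<noteq> 0" by metis
  then show ?thesis using BL LF by blast
qed

theorem mainTheorem5:
  fixes F0 :: "'a::field set"
  assumes "is_subfield F0" and "F0 \<noteq> UNIV"
  shows "\<not> subfield_generated F0"
proof
  assume gen: "subfield_generated F0"
  define S where "S = (\<lambda>L. kspan UNIV L) ` ts_subspaces F0 2"
  have span_eq: "geom_span S = grass_points" using gen unfolding subfield_generated_def S_def .
  obtain Z0 where Z0: "Z0 \<in> grass_points" "Z0 \<notin> P0 F0" using proper[OF assms] by blast
  show False
  proof (cases "S \<subseteq> P0 F0")
    case True
    then have "geom_span S \<subseteq> P0 F0" unfolding geom_span_def using geom_P0[OF assms(1)] by blast
    then show False using Z0 span_eq by blast
  next
    case False
    then obtain L where L: "L \<in> ts_subspaces F0 2" "kspan UNIV L \<notin> P0 F0" unfolding S_def by blast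
    obtain v where v: "v \<in> L" "v \<in> coords_in F0" "v \<noteq> 0" using L_rat[OF L(1)] by blast
    have "v \<in> kspan UNIV L" using kspan_sup v(1) by blast
    then have "kspan UNIV L \<notin> grass_points" using L(2) v unfolding P0_def pts_iff by blast
    then have "\<not> S \<subseteq> grass_points" using L(1) unfolding S_def by blast
    then have e: "{P. geom_subspace P \<and> S \<subseteq> P} = {}" unfolding geom_subspace_def by blast
    have "geom_span S = UNIV" unfolding geom_span_def e by simp
    moreover have "{} \<notin> grass_points" unfolding pts_iff using vec.subspace_0 by blast
    ultimately show False using span_eq by blast
  qed
qed

end
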